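(* Let $\delta\ge0$ and let $Z_\delta(t)$ be the total discounted IBNR claims defined in the context. For every $n\in\mathbb{N}$ and $t>0$, $$\mathbb{E}[Z_\delta^n(t)]=\sum_{i=0}^{n-1}\mu_{n-i}\binom{n}{i}e^{-(n-i)\delta t}\int_0^t e^{-i\delta x}\,\mathcal{T}_{(n-i)\delta}w(t-x)\,\mathbb{E}[Z_\delta^i(t-x)]\,\mathrm{d}m(x),$$ with starting value $\mathbb{E}[Z_\delta^0(t)]=1$.
   Context: Let $\{\tau_i\}_{i\ge1}$ be i.i.d. positive interarrival times with cdf $F$ and pdf $f=F'$; set $T_0:=0$, $T_n:=\sum_{i=1}^n\tau_i$, and $N(t):=\max\{i\ge 0: T_i\le t\}$, with renewal function $m(t):=\mathbb{E}[N(t)]=\sum_{i\ge1}F^{*(i)}(t)$. Let $\{X_i\}_{i\ge1}$ be i.i.d. claim amounts with generic copy $X$, $\mu_k:=\mathbb{E}[X^k]$, $\mu_0:=1$. Let $\{L_i\}_{i\ge1}$ be i.i.d. reporting delays with cdf $W$, survival function $\overline W=1-W$ and pdf $w=W'$. The sequences $\{\tau_i\}$, $\{X_i\}$, $\{L_i\}$ are mutually independent. For $\delta\ge0$, $Z_\delta(t):=\sum_{i=1}^{\infty}e^{-\delta(T_i+L_i)}\mathbf{1}_{\{T_i\le t<T_i+L_i\}}X_i$. The Dickson–Hipp operator is $\mathcal{T}_u g(v):=\int_v^\infty e^{-u(y-v)}g(y)\,\mathrm{d}y$ for $u,v\ge0$. *)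

theory Defs
  imports "HOL-Probability.Probability"
begin

text \<open>Indexing convention: the paper's interarrival times, claims and delays
  tau_1, tau_2, ... are represented by tau 0, tau 1, ... (shift by one).\<close>

definition arrival :: "(nat \<Rightarrow> 'a \<Rightarrow> real) \<Rightarrow> nat \<Rightarrow> 'a \<Rightarrow> real" where
  "arrival \<tau> n \<omega> = (\<Sum>i<n. \<tau> i \<omega>)"

text \<open>N(t) = max{i \<ge> 0. T_i \<le> t}; since T is strictly increasing with T_0 = 0 this
  is the number of indices i \<ge> 1 with T_i \<le> t.\<close>
definition renewal_count :: "(nat \<Rightarrow> 'a \<Rightarrow> real) \<Rightarrow> real \<Rightarrow> 'a \<Rightarrow> nat" where
  "renewal_count \<tau> t \<omega> = card {i. 1 \<le> i \<and> arrival \<tau> i \<omega> \<le> t}"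

definition renewal_fun :: "'a measure \<Rightarrow> (nat \<Rightarrow> 'a \<Rightarrow> real) \<Rightarrow> real \<Rightarrow> real" where
  "renewal_fun M \<tau> t = (\<integral>\<omega>. real (renewal_count \<tau> t \<omega>) \<partial>M)"

text \<open>Discounted IBNR claims Z_delta(t); summand i corresponds to the paper's index i+1.\<close>
definition Zdisc :: "real \<Rightarrow> (nat \<Rightarrow> 'a \<Rightarrow> real) \<Rightarrow> (nat \<Rightarrow> 'a \<Rightarrow> real) \<Rightarrow>
    (nat \<Rightarrow> 'a \<Rightarrow> real) \<Rightarrow> real \<Rightarrow> 'a \<Rightarrow> real" where
  "Zdisc \<delta> \<tau> X L t \<omega> =
     (\<Sum>i. exp (- \<delta> * (arrival \<tau> (Suc i) \<omega> + L i \<omega>)) *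
           (if arrival \<tau> (Suc i) \<omega> \<le> t \<and> t < arrival \<tau> (Suc i) \<omega> + L i \<omega> then 1 else 0) *
           X i \<omega>)"

definition DH :: "real \<Rightarrow> (real \<Rightarrow> real) \<Rightarrow> real \<Rightarrow> real" where
  "DH u g v = (\<integral>y\<in>{v..}. exp (- u * (y - v)) * g y \<partial>lborel)"

end

theory Submission
  imports Defs "HOL-Real_Asymp.Real_Asymp"
begin

type_synonym idx = "nat + (nat + nat)"

definition tt :: "(idx \<Rightarrow> real) \<Rightarrow> nat \<Rightarrow> real" where "tt y k = y (Inl k)"
definition xx :: "(idx \<Rightarrow> real) \<Rightarrow> nat \<Rightarrow> real" where "xx y k = y (Inr (Inl k))"
definition ll :: "(idx \<Rightarrow> real) \<Rightarrow> nat \<Rightarrow> real" where "ll y k = y (Inr (Inr k))"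
definition Arr :: "(idx \<Rightarrow> real) \<Rightarrow> nat \<Rightarrow> real" where "Arr y k = (\<Sum>i<k. tt y i)"
definition trm :: "real \<Rightarrow> real \<Rightarrow> (idx \<Rightarrow> real) \<Rightarrow> nat \<Rightarrow> real" where
  "trm d s y j = exp (- d * (Arr y (Suc j) + ll y j)) *
     (if Arr y (Suc j) \<le> s \<and> s < Arr y (Suc j) + ll y j then 1 else 0) * xx y j"
definition Phi :: "real \<Rightarrow> real \<Rightarrow> (idx \<Rightarrow> real) \<Rightarrow> real" where
  "Phi d s y = (\<Sum>j. trm d s y j)"
definition sh :: "nat \<Rightarrow> idx \<Rightarrow> idx" where
  "sh m i = (case i of Inl k \<Rightarrow> Inl (k + m) | Inr (Inl k) \<Rightarrow> Inr (Inl (k + m)) | Inr (Inr k) \<Rightarrow> Inr (Inr (k + m)))"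
definition shift :: "nat \<Rightarrow> (idx \<Rightarrow> real) \<Rightarrow> (idx \<Rightarrow> real)" where
  "shift m y = (\<lambda>i. y (sh m i))"
definition Nc :: "real \<Rightarrow> (idx \<Rightarrow> real) \<Rightarrow> nat" where
  "Nc s y = card {k. Arr y (Suc k) \<le> s}"
definition good :: "real \<Rightarrow> (idx \<Rightarrow> real) \<Rightarrow> bool" where
  "good s y \<longleftrightarrow> (\<forall>k. 0 < tt y k) \<and> finite {k. Arr y (Suc k) \<le> s}"

lemma tt_shift[simp]: "tt (shift m y) k = tt y (k + m)"
  and xx_shift[simp]: "xx (shift m y) k = xx y (k + m)"
  and ll_shift[simp]: "ll (shift m y) k = ll y (k + m)"
  by (simp_all add: tt_def xx_def ll_def shift_def sh_def)

lemma Arr_Suc: "Arr y (Suc k) = Arr y k + tt y k"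
  by (simp add: Arr_def)

lemma Arr_0[simp]: "Arr y 0 = 0" by (simp add: Arr_def)

lemma Arr_shift: "Arr y (k + m) = Arr y m + Arr (shift m y) k"
  by (induction k) (auto simp: Arr_Suc add.commute)

lemma Arr_mono_good:
  assumes "\<forall>k. 0 < tt y k" "j \<le> k" shows "Arr y j \<le> Arr y k"
  using assms(2)
proof (induction k)
  case (Suc k) then show ?case using assms(1)[rule_format, of k]
    by (cases "j = Suc k") (auto simp: Arr_Suc)
qed simp

lemma Arr_pos_good:
  assumes "\<forall>k. 0 < tt y k" shows "0 < Arr y (Suc k)"
proof -
  have "0 \<le> Arr y k" using Arr_mono_good[OF assms, of 0 k] by simp
  then show ?thesis using assms by (simp add: Arr_Suc add_nonneg_pos)
qed

lemma finite_down_closed_nat: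
  fixes S :: "nat set"
  assumes "finite S" "\<And>j k. k \<in> S \<Longrightarrow> j \<le> k \<Longrightarrow> j \<in> S"
  shows "S = {..<card S}"
proof -
  obtain K where K: "K \<notin> S" using assms(1) ex_new_if_finite infinite_UNIV_nat by blast
  define L where "L = (LEAST k. k \<notin> S)"
  have L1: "L \<notin> S" unfolding L_def using K by (rule LeastI)
  have L2: "k < L \<Longrightarrow> k \<in> S" for k unfolding L_def using not_less_Least by blast
  have "S = {..<L}"
  proof
    show "S \<subseteq> {..<L}" using L1 assms(2) by (auto simp: not_less[symmetric])
    show "{..<L} \<subseteq> S" using L2 by auto
  qed
  then show ?thesis by simp
qed

lemma good_set:
  assumes "good s y" shows "{k. Arr y (Suc k) \<le> s} = {..<Nc s y}"
  unfolding Nc_def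
proof (rule finite_down_closed_nat)
  show "finite {k. Arr y (Suc k) \<le> s}" using assms by (simp add: good_def)
  fix j k assume "k \<in> {k. Arr y (Suc k) \<le> s}" "j \<le> k"
  then show "j \<in> {k. Arr y (Suc k) \<le> s}"
    using Arr_mono_good[of y "Suc j" "Suc k"] assms by (auto simp: good_def)
qed

lemma good_Nc_iff: "good s y \<Longrightarrow> Arr y (Suc k) \<le> s \<longleftrightarrow> k < Nc s y"
  using good_set[of s y] by (auto simp: set_eq_iff)

lemma trm_zero: "good s y \<Longrightarrow> Nc s y \<le> j \<Longrightarrow> trm d s y j = 0"
  using good_Nc_iff[of s y j] by (auto simp: trm_def)

lemma trm_shift:
  "trm d s y (k + m) = exp (- d * Arr y m) * trm d (s - Arr y m) (shift m y) k"
proof -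
  have A: "Arr y (Suc (k + m)) = Arr y m + Arr (shift m y) (Suc k)"
    using Arr_shift[of y "Suc k" m] by simp
  show ?thesis unfolding trm_def A
    by (simp add: algebra_simps exp_add[symmetric])
qed

lemma good_mono: "good t y \<Longrightarrow> s \<le> t \<Longrightarrow> good s y"
  unfolding good_def by (auto elim!: rev_finite_subset)

lemma Nc_mono: "good t y \<Longrightarrow> s \<le> t \<Longrightarrow> Nc s y \<le> Nc t y"
  unfolding Nc_def good_def by (auto intro!: card_mono)

lemma sums_finite_support:
  fixes a :: "nat \<Rightarrow> real"
  assumes "\<And>j. K \<le> j \<Longrightarrow> a j = 0"
  shows "a sums (\<Sum>j<K. a j)"
  using assms by (intro sums_finite) auto

lemma Phi_finite:
  assumes "good s y" shows "Phi d s y = (\<Sum>j<Nc s y. trm d s y j)"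
  unfolding Phi_def using sums_finite_support[of "Nc s y" "trm d s y"] trm_zero[OF assms]
  by (simp add: sums_iff)


lemma binomial_minus_top:
  fixes a b :: real
  assumes "1 \<le> n"
  shows "(a + b) ^ n - b ^ n = (\<Sum>i<n. real (n choose i) * a ^ (n - i) * b ^ i)"
proof -
  have "(a + b) ^ n = (b + a) ^ n" by (simp add: add.commute)
  also have "\<dots> = (\<Sum>i\<le>n. real (n choose i) * b ^ i * a ^ (n - i))"
    by (rule binomial_ring)
  also have "\<dots> = (\<Sum>i<n. real (n choose i) * b ^ i * a ^ (n - i)) + b ^ n"
    by (simp add: lessThan_Suc_atMost[symmetric])
  finally show ?thesis by (simp add: algebra_simps)
qed

lemma telescope_power:
  fixes a :: "nat \<Rightarrow> real"
  assumes n: "1 \<le> n"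
  shows "(\<Sum>j<K. a j) ^ n =
    (\<Sum>j<K. \<Sum>i<n. real (n choose i) * a j ^ (n - i) * (\<Sum>k\<in>{Suc j..<K}. a k) ^ i)"
proof -
  define R where "R j = (\<Sum>k\<in>{j..<K}. a k)" for j
  have RS: "R j = a j + R (Suc j)" if "j < K" for j
    unfolding R_def using that by (simp add: sum.atLeast_Suc_lessThan)
  have "(\<Sum>j<K. R j ^ n - R (Suc j) ^ n) = R 0 ^ n - R K ^ n"
    by (rule sum_lessThan_telescope')
  moreover have "R K = 0" by (simp add: R_def)
  moreover have "R 0 = (\<Sum>j<K. a j)" by (simp add: R_def atLeast0LessThan)
  ultimately have "(\<Sum>j<K. a j) ^ n = (\<Sum>j<K. R j ^ n - R (Suc j) ^ n)"
    using n by simp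
  also have "\<dots> = (\<Sum>j<K. \<Sum>i<n. real (n choose i) * a j ^ (n - i) * R (Suc j) ^ i)"
    by (intro sum.cong refl) (simp add: RS binomial_minus_top[OF n])
  finally show ?thesis by (simp add: R_def)
qed

lemma tail_sum_finite:
  fixes a :: "nat \<Rightarrow> real"
  assumes fin: "\<And>j. K \<le> j \<Longrightarrow> a j = 0"
  shows "(\<Sum>k. a (k + Suc j)) = (\<Sum>k\<in>{Suc j..<K}. a k)"
proof (cases "j < K")
  case True
  have "(\<lambda>k. a (k + Suc j)) sums (\<Sum>k<K - Suc j. a (k + Suc j))"
    using fin by (intro sums_finite_support) auto
  moreover have "(\<Sum>k<K - Suc j. a (k + Suc j)) = (\<Sum>k\<in>{Suc j..<K}. a k)"
  proof -
    have "(\<Sum>k<K - Suc j. a (k + Suc j)) = (\<Sum>k\<in>{0..<K - Suc j}. a (k + Suc j))"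
      by (simp add: atLeast0LessThan)
    also have "\<dots> = (\<Sum>k\<in>{0 + Suc j..<K - Suc j + Suc j}. a k)"
      by (rule sum.shift_bounds_nat_ivl[symmetric])
    also have "\<dots> = (\<Sum>k\<in>{Suc j..<K}. a k)" using True by simp
    finally show ?thesis .
  qed
  ultimately show ?thesis by (simp add: sums_iff)
next
  case False
  then show ?thesis using fin by simp
qed

lemma telescope_sums:
  fixes a :: "nat \<Rightarrow> real"
  assumes fin: "\<And>j. K \<le> j \<Longrightarrow> a j = 0" and n: "1 \<le> n"
  shows "(\<lambda>j. \<Sum>i<n. real (n choose i) * a j ^ (n - i) * (\<Sum>k. a (k + Suc j)) ^ i)
           sums ((\<Sum>j. a j) ^ n)"
proof -
  have S: "(\<Sum>j. a j) = (\<Sum>j<K. a j)" using sums_finite_support[of K a] fin by (simp add: sums_iff)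
  have "(\<lambda>j. \<Sum>i<n. real (n choose i) * a j ^ (n - i) * (\<Sum>k. a (k + Suc j)) ^ i)
     sums (\<Sum>j<K. \<Sum>i<n. real (n choose i) * a j ^ (n - i) * (\<Sum>k. a (k + Suc j)) ^ i)"
    using fin n by (intro sums_finite_support) (auto intro!: sum.neutral)
  also have "(\<Sum>j<K. \<Sum>i<n. real (n choose i) * a j ^ (n - i) * (\<Sum>k. a (k + Suc j)) ^ i)
    = (\<Sum>j<K. \<Sum>i<n. real (n choose i) * a j ^ (n - i) * (\<Sum>k\<in>{Suc j..<K}. a k) ^ i)"
    by (simp only: tail_sum_finite[of K a, OF fin])
  also have "\<dots> = (\<Sum>j. a j) ^ n" using telescope_power[OF n, of a K] S by simp
  finally show ?thesis .
qed

lemma Phi_shift_sum: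
  assumes g: "good t y"
  shows "(\<Sum>k. trm d t y (k + m)) = exp (- d * Arr y m) * Phi d (t - Arr y m) (shift m y)"
proof -
  let ?e = "exp (- d * Arr y m)"
  have eq: "trm d (t - Arr y m) (shift m y) k = trm d t y (k + m) / ?e" for k
    by (simp add: trm_shift)
  have "summable (\<lambda>k. trm d (t - Arr y m) (shift m y) k)"
    unfolding eq
    by (rule sums_summable[OF sums_finite_support[of "Nc t y"]]) (use trm_zero[OF g] in auto)
  then have "(\<Sum>k. ?e * trm d (t - Arr y m) (shift m y) k) = ?e * Phi d (t - Arr y m) (shift m y)"
    unfolding Phi_def by (rule suminf_mult)
  then show ?thesis by (simp add: trm_shift)
qed

lemma Phi_power_sums:
  assumes g: "good t y" and n: "1 \<le> n"
  shows "(\<lambda>j. \<Sum>i<n. real (n choose i) * trm d t y j ^ (n - i) *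
      (exp (- d * Arr y (Suc j)) * Phi d (t - Arr y (Suc j)) (shift (Suc j) y)) ^ i)
      sums (Phi d t y ^ n)"
  using telescope_sums[of "Nc t y" "trm d t y" n] trm_zero[OF g] n
  unfolding Phi_def[of d t y] Phi_shift_sum[OF g, symmetric] by auto


definition Mx :: "(idx \<Rightarrow> real) \<Rightarrow> nat \<Rightarrow> real" where
  "Mx y K = Max (insert 0 ((\<lambda>j. \<bar>xx y j\<bar>) ` {..<K}))"

definition Dm :: "nat \<Rightarrow> real \<Rightarrow> (idx \<Rightarrow> real) \<Rightarrow> real" where
  "Dm n t y = 2 ^ n * (1 + real (Nc t y)) ^ (n + 1) * (1 + (\<Sum>j<Nc t y. (1 + \<bar>xx y j\<bar>) ^ n))"

lemma Mx_nonneg: "0 \<le> Mx y K"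
  unfolding Mx_def by (rule Max_ge) auto

lemma Mx_ge: "j < K \<Longrightarrow> \<bar>xx y j\<bar> \<le> Mx y K"
  unfolding Mx_def by (rule Max_ge) auto

lemma Mx_pow_le: "(1 + Mx y K) ^ n \<le> 1 + (\<Sum>j<K. (1 + \<bar>xx y j\<bar>) ^ n)"
proof -
  have "Mx y K \<in> insert 0 ((\<lambda>j. \<bar>xx y j\<bar>) ` {..<K})"
    unfolding Mx_def by (rule Max_in) auto
  then consider "Mx y K = 0" | j where "j < K" "Mx y K = \<bar>xx y j\<bar>" by auto
  then show ?thesis
  proof cases
    case 1
    have "0 \<le> (\<Sum>j<K. (1 + \<bar>xx y j\<bar>) ^ n)" by (intro sum_nonneg) auto
    then show ?thesis using 1 by simp
  next
    case 2
    have "(1 + \<bar>xx y j\<bar>) ^ n \<le> (\<Sum>j<K. (1 + \<bar>xx y j\<bar>) ^ n)"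
      using 2 by (intro member_le_sum) auto
    then show ?thesis using 2 by simp
  qed
qed

lemma trm_bound:
  assumes g: "good t y" and d: "0 \<le> d" and st: "s \<le> t"
  shows "\<bar>trm d s y j\<bar> \<le> (if j < Nc t y then 1 + Mx y (Nc t y) else 0)"
proof (cases "Arr y (Suc j) \<le> s \<and> s < Arr y (Suc j) + ll y j")
  case True
  then have j: "j < Nc t y" using good_Nc_iff[OF g, of j] st by auto
  have "0 < Arr y (Suc j)" using g Arr_pos_good by (auto simp: good_def)
  then have "0 \<le> d * (Arr y (Suc j) + ll y j)" using True d by (intro mult_nonneg_nonneg) auto
  then have e: "exp (- d * (Arr y (Suc j) + ll y j)) \<le> 1" by simp
  have "\<bar>trm d s y j\<bar> = exp (- d * (Arr y (Suc j) + ll y j)) * \<bar>xx y j\<bar>"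
    using True by (simp add: trm_def abs_mult)
  also have "\<dots> \<le> 1 * \<bar>xx y j\<bar>" using e by (intro mult_right_mono) auto
  also have "\<dots> \<le> 1 + Mx y (Nc t y)" using Mx_ge[OF j, of y] by simp
  finally show ?thesis using j by simp
next
  case False
  then have "trm d s y j = 0" unfolding trm_def by (simp only: if_False)
  then show ?thesis using Mx_nonneg[of y "Nc t y"] by simp
qed

lemma trm_zero_t:
  assumes "good t y" "0 \<le> d" "s \<le> t" "Nc t y \<le> j" shows "trm d s y j = 0"
  using trm_bound[OF assms(1-3), of j] assms(4) by simp

lemma Phi_fin_t:
  assumes "good t y" "0 \<le> d" "s \<le> t" shows "Phi d s y = (\<Sum>j<Nc t y. trm d s y j)"
  unfolding Phi_def using sums_finite_support[of "Nc t y" "trm d s y"] trm_zero_t[OF assms]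
  by (simp add: sums_iff)

lemma Phi_bound:
  assumes g: "good t y" and d: "0 \<le> d" and st: "s \<le> t"
  shows "\<bar>Phi d s y\<bar> \<le> real (Nc t y) * (1 + Mx y (Nc t y))"
proof -
  have "\<bar>Phi d s y\<bar> \<le> (\<Sum>j<Nc t y. \<bar>trm d s y j\<bar>)"
    unfolding Phi_fin_t[OF assms] by (rule sum_abs)
  also have "\<dots> \<le> (\<Sum>j<Nc t y. 1 + Mx y (Nc t y))"
    using trm_bound[OF assms] by (intro sum_mono) (metis lessThan_iff)
  finally show ?thesis by simp
qed

lemma tail_bound:
  assumes g: "good t y" and d: "0 \<le> d"
  shows "\<bar>\<Sum>k. trm d t y (k + Suc j)\<bar> \<le> real (Nc t y) * (1 + Mx y (Nc t y))"
proof -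
  have "(\<Sum>k. trm d t y (k + Suc j)) = (\<Sum>k\<in>{Suc j..<Nc t y}. trm d t y k)"
    by (rule tail_sum_finite) (rule trm_zero_t[OF g d order.refl])
  also have "\<bar>\<dots>\<bar> \<le> (\<Sum>k\<in>{Suc j..<Nc t y}. \<bar>trm d t y k\<bar>)" by (rule sum_abs)
  also have "\<dots> \<le> (\<Sum>k\<in>{Suc j..<Nc t y}. 1 + Mx y (Nc t y))"
  proof (intro sum_mono)
    fix k assume "k \<in> {Suc j..<Nc t y}"
    then show "\<bar>trm d t y k\<bar> \<le> 1 + Mx y (Nc t y)" using trm_bound[OF g d order.refl, of k] by simp
  qed
  also have "\<dots> \<le> (\<Sum>k<Nc t y. 1 + Mx y (Nc t y))"
    using Mx_nonneg[of y "Nc t y"] by (intro sum_mono2) auto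
  finally show ?thesis by simp
qed


lemma Dm_ge:
  "(1 + real (Nc t y)) ^ (n + 1) * (1 + Mx y (Nc t y)) ^ n * 2 ^ n \<le> Dm n t y"
proof -
  have "(1 + real (Nc t y)) ^ (n + 1) * (1 + Mx y (Nc t y)) ^ n \<le>
        (1 + real (Nc t y)) ^ (n + 1) * (1 + (\<Sum>j<Nc t y. (1 + \<bar>xx y j\<bar>) ^ n))"
    by (intro mult_left_mono Mx_pow_le) auto
  from mult_left_mono[OF this, of "2 ^ n"] show ?thesis unfolding Dm_def by (simp add: mult_ac)
qed

lemma Dm_nonneg: "0 \<le> Dm n t y"
  unfolding Dm_def by (intro mult_nonneg_nonneg sum_nonneg add_nonneg_nonneg) auto

lemma Phi_pow_bound:
  assumes g: "good t y" and d: "0 \<le> d" and st: "s \<le> t" and i: "i \<le> n"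
  shows "\<bar>Phi d s y ^ i\<bar> \<le> Dm n t y"
proof -
  let ?K = "real (Nc t y)" and ?m = "1 + Mx y (Nc t y)"
  have m1: "1 \<le> ?m" using Mx_nonneg[of y "Nc t y"] by simp
  have "\<bar>Phi d s y ^ i\<bar> = \<bar>Phi d s y\<bar> ^ i" by (simp add: power_abs)
  also have "\<dots> \<le> (?K * ?m) ^ i" by (intro power_mono Phi_bound[OF assms(1-3)]) auto
  also have "\<dots> \<le> ((1 + ?K) * ?m) ^ i" using m1 by (intro power_mono mult_right_mono) auto
  also have "\<dots> \<le> ((1 + ?K) * ?m) ^ n" using m1 i
  proof (intro power_increasing)
    show "1 \<le> (1 + ?K) * ?m" using m1 mult_mono[OF _ m1, of 1 "1 + ?K"] by simp
  qed
  also have "\<dots> \<le> (1 + ?K) ^ (n + 1) * ?m ^ n * 2 ^ n"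
  proof -
    have "(1 + ?K) ^ n \<le> (1 + ?K) ^ (n + 1)" by (intro power_increasing) auto
    then have "(1 + ?K) ^ n * ?m ^ n \<le> (1 + ?K) ^ (n + 1) * ?m ^ n"
      using m1 by (intro mult_right_mono) auto
    also have "\<dots> \<le> (1 + ?K) ^ (n + 1) * ?m ^ n * 2 ^ n"
    proof -
      have "0 \<le> (1 + ?K) ^ (n + 1) * ?m ^ n" using m1 by simp
      moreover have "(1::real) \<le> 2 ^ n" by simp
      ultimately show ?thesis using mult_left_mono[of 1 "2 ^ n" "(1 + ?K) ^ (n + 1) * ?m ^ n"] by simp
    qed
    finally show ?thesis by (simp add: power_mult_distrib)
  qed
  also have "\<dots> \<le> Dm n t y" by (rule Dm_ge)
  finally show ?thesis .
qed


definition Fterm :: "real \<Rightarrow> nat \<Rightarrow> nat \<Rightarrow> real \<Rightarrow> (idx \<Rightarrow> real) \<Rightarrow> nat \<Rightarrow> real" where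
  "Fterm d n i t y j = real (n choose i) * trm d t y j ^ (n - i) * (\<Sum>k. trm d t y (k + Suc j)) ^ i"

lemma Fterm_bound:
  assumes g: "good t y" and d: "0 \<le> d" and i: "i < n"
  shows "\<bar>Fterm d n i t y j\<bar> \<le> real (n choose i) *
     (if j < Nc t y then (1 + real (Nc t y)) ^ n * (1 + Mx y (Nc t y)) ^ n else 0)"
proof (cases "j < Nc t y")
  case False
  then have "trm d t y j = 0" using trm_zero_t[OF g d order.refl] by simp
  then show ?thesis using False i by (simp add: Fterm_def)
next
  case True
  let ?K = "real (Nc t y)" and ?m = "1 + Mx y (Nc t y)"
  have m1: "1 \<le> ?m" using Mx_nonneg[of y "Nc t y"] by simp
  have a: "\<bar>trm d t y j\<bar> ^ (n - i) \<le> ?m ^ (n - i)"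
    using trm_bound[OF g d order.refl, of j] True by (intro power_mono) auto
  have b: "\<bar>\<Sum>k. trm d t y (k + Suc j)\<bar> ^ i \<le> ((1 + ?K) * ?m) ^ i"
    using tail_bound[OF g d, of j] m1 by (intro power_mono) (auto intro: order.trans mult_right_mono)
  have "\<bar>Fterm d n i t y j\<bar> = real (n choose i) * (\<bar>trm d t y j\<bar> ^ (n - i) * \<bar>\<Sum>k. trm d t y (k + Suc j)\<bar> ^ i)"
    by (simp add: Fterm_def abs_mult power_abs)
  also have "\<dots> \<le> real (n choose i) * (?m ^ (n - i) * ((1 + ?K) * ?m) ^ i)"
    using a b m1 by (intro mult_left_mono mult_mono) (auto intro!: zero_le_power)
  also have "?m ^ (n - i) * ((1 + ?K) * ?m) ^ i = (1 + ?K) ^ i * ?m ^ n"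
    using i by (simp add: power_mult_distrib power_add[symmetric] mult_ac)
  also have "(1 + ?K) ^ i \<le> (1 + ?K) ^ n" using i by (intro power_increasing) auto
  then have "real (n choose i) * ((1 + ?K) ^ i * ?m ^ n) \<le> real (n choose i) * ((1 + ?K) ^ n * ?m ^ n)"
    using m1 by (intro mult_left_mono mult_right_mono) auto
  finally show ?thesis using True by simp
qed

lemma choose_sum_le: "(\<Sum>i<n. real (n choose i)) \<le> 2 ^ n"
proof -
  have "(\<Sum>i<n. real (n choose i)) \<le> (\<Sum>i\<le>n. real (n choose i))"
    by (intro sum_mono2) auto
  also have "\<dots> = 2 ^ n" using choose_row_sum[of n] by (metis of_nat_numeral of_nat_power of_nat_sum)
  finally show ?thesis .
qed

lemma Fsum_bound:
  assumes g: "good t y" and d: "0 \<le> d"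
  shows "\<bar>\<Sum>i<n. Fterm d n i t y j\<bar> \<le>
     2 ^ n * (if j < Nc t y then (1 + real (Nc t y)) ^ n * (1 + Mx y (Nc t y)) ^ n else 0)"
proof -
  let ?c = "(if j < Nc t y then (1 + real (Nc t y)) ^ n * (1 + Mx y (Nc t y)) ^ n else 0)"
  have c: "0 \<le> ?c" using Mx_nonneg[of y "Nc t y"] by simp
  have "\<bar>\<Sum>i<n. Fterm d n i t y j\<bar> \<le> (\<Sum>i<n. \<bar>Fterm d n i t y j\<bar>)" by (rule sum_abs)
  also have "\<dots> \<le> (\<Sum>i<n. real (n choose i) * ?c)"
    using Fterm_bound[OF g d] by (intro sum_mono) auto
  also have "\<dots> = (\<Sum>i<n. real (n choose i)) * ?c" by (simp add: sum_distrib_right)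
  also have "\<dots> \<le> 2 ^ n * ?c" using choose_sum_le c by (intro mult_right_mono) auto
  finally show ?thesis .
qed

lemma Fterm_le_Dm:
  assumes g: "good t y" and d: "0 \<le> d" and i: "i < n"
  shows "\<bar>Fterm d n i t y j\<bar> \<le> Dm n t y"
proof -
  let ?K = "real (Nc t y)" and ?m = "1 + Mx y (Nc t y)"
  have m1: "1 \<le> ?m" using Mx_nonneg[of y "Nc t y"] by simp
  have "\<bar>Fterm d n i t y j\<bar> \<le> real (n choose i) * ((1 + ?K) ^ n * ?m ^ n)"
    using Fterm_bound[OF assms, of j] m1 by (auto split: if_splits)
  also have "\<dots> \<le> 2 ^ n * ((1 + ?K) ^ (n + 1) * ?m ^ n)"
  proof (rule mult_mono)
    have "real (n choose i) \<le> (\<Sum>i<n. real (n choose i))"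
      using i by (intro member_le_sum) auto
    then show "real (n choose i) \<le> 2 ^ n"
      using choose_sum_le[of n] by linarith
    show "(1 + ?K) ^ n * ?m ^ n \<le> (1 + ?K) ^ (n + 1) * ?m ^ n"
      using m1 by (intro mult_right_mono power_increasing) auto
  qed (use m1 in auto)
  also have "\<dots> \<le> Dm n t y" using Dm_ge[of t y n] by (simp add: mult_ac)
  finally show ?thesis .
qed

lemma Fpartial_bound:
  assumes g: "good t y" and d: "0 \<le> d"
  shows "\<bar>\<Sum>j<N. \<Sum>i<n. Fterm d n i t y j\<bar> \<le> Dm n t y"
proof -
  let ?K = "real (Nc t y)" and ?m = "1 + Mx y (Nc t y)"
  let ?c = "\<lambda>j. 2 ^ n * (if j < Nc t y then (1 + ?K) ^ n * ?m ^ n else 0)"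
  have m1: "1 \<le> ?m" using Mx_nonneg[of y "Nc t y"] by simp
  have "\<bar>\<Sum>j<N. \<Sum>i<n. Fterm d n i t y j\<bar> \<le> (\<Sum>j<N. \<bar>\<Sum>i<n. Fterm d n i t y j\<bar>)" by (rule sum_abs)
  also have "\<dots> \<le> (\<Sum>j<N. ?c j)" using Fsum_bound[OF g d] by (intro sum_mono) auto
  also have "\<dots> \<le> (\<Sum>j<Nc t y. ?c j)"
  proof -
    have "(\<Sum>j<N. ?c j) = (\<Sum>j\<in>{..<N} \<inter> {..<Nc t y}. ?c j)"
      by (intro sum.mono_neutral_right) auto
    also have "\<dots> \<le> (\<Sum>j<Nc t y. ?c j)" using m1 by (intro sum_mono2) auto
    finally show ?thesis .
  qed
  also have "\<dots> = ?K * (2 ^ n * ((1 + ?K) ^ n * ?m ^ n))" by simp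
  also have "\<dots> \<le> (1 + ?K) * (2 ^ n * ((1 + ?K) ^ n * ?m ^ n))"
    using m1 by (intro mult_right_mono) auto
  also have "\<dots> \<le> Dm n t y" using Dm_ge[of t y n] by (simp add: mult_ac)
  finally show ?thesis .
qed


lemma Fterm_sums:
  assumes g: "good t y" and n: "1 \<le> n"
  shows "(\<lambda>j. \<Sum>i<n. Fterm d n i t y j) sums (Phi d t y ^ n)"
  unfolding Fterm_def Phi_def using telescope_sums[of "Nc t y" "trm d t y" n] trm_zero[OF g] n
  by auto

lemma Fterm_shift:
  assumes g: "good t y"
  shows "Fterm d n i t y j = real (n choose i) * trm d t y j ^ (n - i) *
     (exp (- d * Arr y (Suc j)) * Phi d (t - Arr y (Suc j)) (shift (Suc j) y)) ^ i"
  unfolding Fterm_def Phi_shift_sum[OF g] ..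

definition NN :: "real \<Rightarrow> (idx \<Rightarrow> real) \<Rightarrow> real" where
  "NN t y = (\<Sum>k. if Arr y (Suc k) \<le> t then 1 else 0)"
definition SX :: "nat \<Rightarrow> real \<Rightarrow> (idx \<Rightarrow> real) \<Rightarrow> real" where
  "SX n t y = (\<Sum>k. if Arr y (Suc k) \<le> t then (1 + \<bar>xx y k\<bar>) ^ n else 0)"
definition Dmm :: "nat \<Rightarrow> real \<Rightarrow> (idx \<Rightarrow> real) \<Rightarrow> real" where
  "Dmm n t y = 2 ^ n * (1 + NN t y) ^ (n + 1) * (1 + SX n t y)"

lemma NN_good: "good t y \<Longrightarrow> NN t y = real (Nc t y)"
  unfolding NN_def
  using sums_finite_support[of "Nc t y" "\<lambda>k. if Arr y (Suc k) \<le> t then 1 else 0"]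
  by (auto simp: sums_iff good_Nc_iff)

lemma SX_good: "good t y \<Longrightarrow> SX n t y = (\<Sum>j<Nc t y. (1 + \<bar>xx y j\<bar>) ^ n)"
  unfolding SX_def
  using sums_finite_support[of "Nc t y" "\<lambda>k. if Arr y (Suc k) \<le> t then (1 + \<bar>xx y k\<bar>) ^ n else 0"]
  by (auto simp: sums_iff good_Nc_iff)

lemma Dmm_good: "good t y \<Longrightarrow> Dmm n t y = Dm n t y"
  by (simp add: Dmm_def Dm_def NN_good SX_good)


abbreviation SS :: "(idx \<Rightarrow> real) measure" where "SS \<equiv> PiM UNIV (\<lambda>_. borel)"

lemma meas_tt[measurable]: "(\<lambda>y. tt y k) \<in> borel_measurable SS"
  unfolding tt_def by measurable
lemma meas_xx[measurable]: "(\<lambda>y. xx y k) \<in> borel_measurable SS"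
  unfolding xx_def by measurable
lemma meas_ll[measurable]: "(\<lambda>y. ll y k) \<in> borel_measurable SS"
  unfolding ll_def by measurable
lemma meas_Arr[measurable]: "(\<lambda>y. Arr y k) \<in> borel_measurable SS"
  unfolding Arr_def by measurable

lemma meas_trm[measurable]: "(\<lambda>(s, y). trm d s y j) \<in> borel_measurable (borel \<Otimes>\<^sub>M SS)"
  unfolding trm_def by measurable

lemma meas_Phi[measurable]: "(\<lambda>(s, y). Phi d s y) \<in> borel_measurable (borel \<Otimes>\<^sub>M SS)"
  unfolding Phi_def by measurable

lemma meas_Phi1[measurable]: "(\<lambda>y. Phi d s y) \<in> borel_measurable SS"
  unfolding Phi_def trm_def by measurable

lemma meas_shift[measurable]: "(\<lambda>y. shift m y) \<in> measurable SS SS"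
  unfolding shift_def by (rule measurable_PiM_single') (auto simp: space_PiM)

lemma meas_Fterm[measurable]: "(\<lambda>y. Fterm d n i t y j) \<in> borel_measurable SS"
  unfolding Fterm_def trm_def by measurable

lemma meas_Dmm[measurable]: "(\<lambda>y. Dmm n t y) \<in> borel_measurable SS"
  unfolding Dmm_def NN_def SX_def by measurable


lemma (in prob_space) indep_vars_reindex:
  fixes V :: "'i \<Rightarrow> 'a \<Rightarrow> real" and h :: "'j \<Rightarrow> 'i"
  assumes ind: "indep_vars (\<lambda>_. borel) V UNIV" and h: "inj_on h J" "J \<noteq> {}"
  shows "indep_vars (\<lambda>_. borel) (\<lambda>j. V (h j)) J"
proof -
  have rv[measurable]: "V i \<in> borel_measurable M" for i
    using ind by (auto simp: indep_vars_def)
  let ?P = "\<lambda>i. distr M borel (V i)"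
  have D: "distr M (PiM UNIV (\<lambda>_. borel)) (\<lambda>x. \<lambda>i\<in>UNIV. V i x) = PiM UNIV ?P"
    using indep_vars_iff_distr_eq_PiM[where I=UNIV and X=V and M'="\<lambda>_. borel"] ind rv by auto
  have mV: "(\<lambda>x. \<lambda>i\<in>UNIV. V i x) \<in> measurable M (PiM UNIV (\<lambda>_. borel))" by measurable
  have mR: "(\<lambda>\<omega>. \<lambda>j\<in>J. \<omega> (h j)) \<in> measurable (PiM UNIV (\<lambda>_. borel)) (PiM J (\<lambda>_. borel :: real measure))"
    by (rule measurable_restrict) auto
  have "distr M (PiM J (\<lambda>_. borel)) (\<lambda>x. \<lambda>j\<in>J. V (h j) x) =
        distr (distr M (PiM UNIV (\<lambda>_. borel)) (\<lambda>x. \<lambda>i\<in>UNIV. V i x)) (PiM J (\<lambda>_. borel)) (\<lambda>\<omega>. \<lambda>j\<in>J. \<omega> (h j))"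
    by (subst distr_distr[OF mR mV]) (simp add: comp_def)
  also have "\<dots> = distr (PiM UNIV ?P) (PiM J (\<lambda>j. ?P (h j))) (\<lambda>\<omega>. \<lambda>j\<in>J. \<omega> (h j))"
    unfolding D by (intro distr_cong refl sets_PiM_cong) auto
  also have "\<dots> = PiM J (\<lambda>j. ?P (h j))"
    by (rule distr_PiM_reindex) (auto intro!: prob_space_distr h)
  finally show ?thesis
    using indep_vars_iff_distr_eq_PiM'[where I=J and X="\<lambda>j. V (h j)" and M'="\<lambda>_. borel"] h by auto
qed

lemma (in prob_space) indep_var_integral_split:
  fixes h :: "'b \<times> 'b \<Rightarrow> real"
  assumes ind: "indep_var S1 U S2 W" and h[measurable]: "h \<in> borel_measurable (S1 \<Otimes>\<^sub>M S2)"
    and int: "integrable M (\<lambda>\<omega>. h (U \<omega>, W \<omega>))"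
  shows "(\<integral>\<omega>. h (U \<omega>, W \<omega>) \<partial>M) = (\<integral>\<omega>. (\<integral>\<omega>'. h (U \<omega>, W \<omega>') \<partial>M) \<partial>M)"
proof -
  have U[measurable]: "U \<in> measurable M S1" and W[measurable]: "W \<in> measurable M S2"
    using indep_var_rv1[OF ind] indep_var_rv2[OF ind] by auto
  interpret PU: prob_space "distr M S1 U" by (rule prob_space_distr) simp
  interpret PW: prob_space "distr M S2 W" by (rule prob_space_distr) simp
  interpret PUW: pair_sigma_finite "distr M S1 U" "distr M S2 W" ..
  have J: "distr M S1 U \<Otimes>\<^sub>M distr M S2 W = distr M (S1 \<Otimes>\<^sub>M S2) (\<lambda>x. (U x, W x))"
    using ind indep_var_distribution_eq by blast
  have hm: "h \<in> borel_measurable (distr M S1 U \<Otimes>\<^sub>M distr M S2 W)"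
    by (simp add: J)
  have intJ: "integrable (distr M S1 U \<Otimes>\<^sub>M distr M S2 W) h"
    unfolding J by (subst integrable_distr_eq) (auto simp: int)
  have "(\<integral>\<omega>. h (U \<omega>, W \<omega>) \<partial>M) = integral\<^sup>L (distr M (S1 \<Otimes>\<^sub>M S2) (\<lambda>x. (U x, W x))) h"
    by (subst integral_distr) auto
  also have "\<dots> = (\<integral>u. (\<integral>w. h (u, w) \<partial>distr M S2 W) \<partial>distr M S1 U)"
    unfolding J[symmetric] by (rule PUW.integral_fst'[OF intJ, symmetric])
  also have "\<dots> = (\<integral>\<omega>. (\<integral>w. h (U \<omega>, w) \<partial>distr M S2 W) \<partial>M)"
  proof (rule integral_distr)
    show "U \<in> measurable M S1" by simp
    have "(\<lambda>u. \<integral>w. h (u, w) \<partial>distr M S2 W) \<in> borel_measurable (distr M S1 U)"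
      using hm by (intro PW.borel_measurable_lebesgue_integral) simp
    then show "(\<lambda>u. \<integral>w. h (u, w) \<partial>distr M S2 W) \<in> borel_measurable S1" by simp
  qed
  also have "\<dots> = (\<integral>\<omega>. (\<integral>\<omega>'. h (U \<omega>, W \<omega>') \<partial>M) \<partial>M)"
  proof (rule Bochner_Integration.integral_cong)
    fix \<omega> assume "\<omega> \<in> space M"
    then have u: "U \<omega> \<in> space S1" using U by (auto simp: measurable_def)
    show "(\<integral>w. h (U \<omega>, w) \<partial>distr M S2 W) = (\<integral>\<omega>'. h (U \<omega>, W \<omega>') \<partial>M)"
      using u by (intro integral_distr) auto
  qed simp
  finally show ?thesis .
qed

lemma (in prob_space) indep_var_nn_integral:
  assumes ind: "indep_var borel A borel B" and A: "\<And>\<omega>. 0 \<le> A \<omega>" and B: "\<And>\<omega>. 0 \<le> B \<omega>"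
  shows "(\<integral>\<^sup>+\<omega>. ennreal (A \<omega> * B \<omega>) \<partial>M) = (\<integral>\<^sup>+\<omega>. ennreal (A \<omega>) \<partial>M) * (\<integral>\<^sup>+\<omega>. ennreal (B \<omega>) \<partial>M)"
proof -
  have e: "(\<lambda>_::bool. borel) = case_bool borel borel" by (rule ext) (simp split: bool.split)
  have "indep_vars (\<lambda>_. borel) (case_bool A B) UNIV"
    using ind unfolding indep_var_def e .
  then have "indep_vars (\<lambda>_. borel) (\<lambda>i \<omega>. ennreal (case_bool A B i \<omega>)) UNIV"
    by (rule indep_vars_compose2) measurable
  from indep_vars_nn_integral[OF _ this]
  have "(\<integral>\<^sup>+\<omega>. (\<Prod>i\<in>UNIV. ennreal (case_bool A B i \<omega>)) \<partial>M) = (\<Prod>i\<in>UNIV. \<integral>\<^sup>+\<omega>. ennreal (case_bool A B i \<omega>) \<partial>M)"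
    by simp
  then show ?thesis using A B by (simp add: UNIV_bool ennreal_mult[symmetric] mult.commute)
qed


locale ibnr = prob_space M for M :: "'a measure" +
  fixes \<tau> X L :: "nat \<Rightarrow> 'a \<Rightarrow> real" and f w :: "real \<Rightarrow> real" and \<delta> :: real
  assumes indep: "indep_vars (\<lambda>_. borel) (case_sum \<tau> (case_sum X L)) UNIV"
    and tau_pos: "\<And>i \<omega>. \<omega> \<in> space M \<Longrightarrow> \<tau> i \<omega> > 0"
    and f_nonneg: "\<And>x. f x \<ge> 0" and f_meas: "f \<in> borel_measurable borel"
    and tau_dens: "\<And>i. distributed M lborel (\<tau> i) (\<lambda>x. ennreal (f x))"
    and X_ident: "\<And>i. distr M borel (X i) = distr M borel (X 0)"
    and w_nonneg: "\<And>x. w x \<ge> 0" and w_meas: "w \<in> borel_measurable borel"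
    and L_dens: "\<And>i. distributed M lborel (L i) (\<lambda>x. ennreal (w x))"
    and delta: "\<delta> \<ge> 0"
begin

definition V :: "idx \<Rightarrow> 'a \<Rightarrow> real" where "V = case_sum \<tau> (case_sum X L)"
definition Vs :: "'a \<Rightarrow> idx \<Rightarrow> real" where "Vs \<omega> = (\<lambda>i. V i \<omega>)"

lemma indepV: "indep_vars (\<lambda>_. borel) V UNIV"
  using indep by (simp add: V_def)

lemma V_meas[measurable]: "V i \<in> borel_measurable M"
  using indepV by (auto simp: indep_vars_def)

lemma tau_meas[measurable]: "\<tau> i \<in> borel_measurable M"
  and X_meas[measurable]: "X i \<in> borel_measurable M"
  and L_meas[measurable]: "L i \<in> borel_measurable M"
  using V_meas[of "Inl i"] V_meas[of "Inr (Inl i)"] V_meas[of "Inr (Inr i)"] by (simp_all add: V_def)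

lemma Vs_meas[measurable]: "Vs \<in> measurable M SS"
  unfolding Vs_def by (rule measurable_PiM_single') (auto simp: space_PiM)

lemma tt_Vs[simp]: "tt (Vs \<omega>) k = \<tau> k \<omega>"
  and xx_Vs[simp]: "xx (Vs \<omega>) k = X k \<omega>"
  and ll_Vs[simp]: "ll (Vs \<omega>) k = L k \<omega>"
  by (simp_all add: tt_def xx_def ll_def Vs_def V_def)

lemma Arr_Vs: "Arr (Vs \<omega>) k = arrival \<tau> k \<omega>"
  by (simp add: Arr_def arrival_def)

lemma Zdisc_Phi: "Zdisc \<delta> \<tau> X L s \<omega> = Phi \<delta> s (Vs \<omega>)"
  unfolding Zdisc_def Phi_def trm_def Arr_Vs by simp

lemma distr_lborel_borel: "distr M borel g = distr M lborel g"
  by (rule distr_cong) auto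

lemma distr_V_shift: "distr M borel (V (sh m i)) = distr M borel (V i)"
proof -
  have t: "distr M borel (\<tau> k) = distr M borel (\<tau> k')" for k k'
    using tau_dens[of k] tau_dens[of k'] by (simp add: distributed_def distr_lborel_borel)
  have l: "distr M borel (L k) = distr M borel (L k')" for k k'
    using L_dens[of k] L_dens[of k'] by (simp add: distributed_def distr_lborel_borel)
  have x: "distr M borel (X k) = distr M borel (X k')" for k k'
    using X_ident[of k] X_ident[of k'] by simp
  show ?thesis
    by (cases i rule: sum.exhaust; (rename_tac a, case_tac a)?)
       (auto simp: sh_def V_def t l x split: sum.split)
qed

lemma distr_Vs: "distr M SS Vs = PiM UNIV (\<lambda>i. distr M borel (V i))"
  using indep_vars_iff_distr_eq_PiM[where I=UNIV and X=V and M'="\<lambda>_. borel"] indepV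
  by (simp add: Vs_def[abs_def] restrict_def)

lemma inj_sh: "inj (sh m)"
  unfolding inj_def sh_def by (auto split: sum.splits)

lemma distr_shift: "distr M SS (\<lambda>\<omega>. shift m (Vs \<omega>)) = distr M SS Vs"
proof -
  have ind: "indep_vars (\<lambda>_. borel) (\<lambda>i. V (sh m i)) UNIV"
    using indep_vars_reindex[OF indepV, of "sh m" UNIV] inj_sh by simp
  have "distr M SS (\<lambda>\<omega>. shift m (Vs \<omega>)) = PiM UNIV (\<lambda>i. distr M borel (V (sh m i)))"
    using indep_vars_iff_distr_eq_PiM[where I=UNIV and X="\<lambda>i. V (sh m i)" and M'="\<lambda>_. borel"] ind
    by (simp add: shift_def Vs_def restrict_def)
  also have "\<dots> = distr M SS Vs" by (simp add: distr_Vs distr_V_shift)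
  finally show ?thesis .
qed

lemma integral_shift:
  fixes g :: "(idx \<Rightarrow> real) \<Rightarrow> real"
  assumes [measurable]: "g \<in> borel_measurable SS"
  shows "(\<integral>\<omega>. g (shift m (Vs \<omega>)) \<partial>M) = (\<integral>\<omega>. g (Vs \<omega>) \<partial>M)"
proof -
  have "(\<integral>\<omega>. g (shift m (Vs \<omega>)) \<partial>M) = integral\<^sup>L (distr M SS (\<lambda>\<omega>. shift m (Vs \<omega>))) g"
    by (rule integral_distr[where g="\<lambda>\<omega>. shift m (Vs \<omega>)" and f=g and N=SS, symmetric]) auto
  also have "\<dots> = integral\<^sup>L (distr M SS Vs) g" by (simp add: distr_shift)
  also have "\<dots> = (\<integral>\<omega>. g (Vs \<omega>) \<partial>M)" by (rule integral_distr[where g=Vs and f=g and N=SS]) auto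
  finally show ?thesis .
qed

end

lemma suminf_indicator_count_space:
  "(\<Sum>k. indicator A k :: ennreal) = emeasure (count_space (UNIV::nat set)) A"
proof -
  have "(\<Sum>k. indicator A k :: ennreal) = (\<integral>\<^sup>+k. indicator A k \<partial>count_space UNIV)"
    by (rule nn_integral_count_space_nat[symmetric])
  also have "\<dots> = emeasure (count_space UNIV) A" by (rule nn_integral_indicator) simp
  finally show ?thesis .
qed

lemma real_card_enn2real:
  fixes A :: "nat set"
  shows "real (card A) = enn2real (\<Sum>k. indicator A k :: ennreal)"
  unfolding suminf_indicator_count_space by (cases "finite A") (auto simp: emeasure_count_space)

context ibnr
begin

definition T :: "nat \<Rightarrow> 'a \<Rightarrow> real" where "T k \<omega> = arrival \<tau> (Suc k) \<omega>"

lemma T_meas[measurable]: "T k \<in> borel_measurable M"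
  unfolding T_def arrival_def by measurable

lemma Arr_Vs_T: "Arr (Vs \<omega>) (Suc k) = T k \<omega>"
  by (simp add: T_def Arr_Vs)

lemma tt_pos: "\<omega> \<in> space M \<Longrightarrow> \<forall>k. 0 < tt (Vs \<omega>) k"
  using tau_pos by simp

lemma T_pos: "\<omega> \<in> space M \<Longrightarrow> 0 < T k \<omega>"
  using Arr_pos_good[OF tt_pos] by (simp add: Arr_Vs_T)

lemma tau_nonneg: "\<omega> \<in> space M \<Longrightarrow> 0 \<le> \<tau> i \<omega>"
  using tau_pos[of \<omega> i] by simp

lemma T_nonneg: "\<omega> \<in> space M \<Longrightarrow> 0 \<le> T k \<omega>"
  using T_pos[of \<omega> k] by simp

lemma distr_tau: "distr M borel (\<tau> k) = distr M borel (\<tau> k')"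
  using tau_dens[of k] tau_dens[of k'] by (simp add: distributed_def distr_lborel_borel)

lemma distr_X: "distr M borel (X k) = distr M borel (X 0)"
  by (rule X_ident)

lemma integral_tau:
  fixes g :: "real \<Rightarrow> real" assumes [measurable]: "g \<in> borel_measurable borel"
  shows "(\<integral>\<omega>. g (\<tau> k \<omega>) \<partial>M) = (\<integral>\<omega>. g (\<tau> 0 \<omega>) \<partial>M)"
proof -
  have "(\<integral>\<omega>. g (\<tau> k \<omega>) \<partial>M) = integral\<^sup>L (distr M borel (\<tau> k)) g"
    by (rule integral_distr[symmetric]) auto
  also have "\<dots> = integral\<^sup>L (distr M borel (\<tau> 0)) g" by (simp add: distr_tau[of k 0])
  also have "\<dots> = (\<integral>\<omega>. g (\<tau> 0 \<omega>) \<partial>M)" by (rule integral_distr) auto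
  finally show ?thesis .
qed

lemma integral_X:
  fixes g :: "real \<Rightarrow> real" assumes [measurable]: "g \<in> borel_measurable borel"
  shows "(\<integral>\<omega>. g (X k \<omega>) \<partial>M) = (\<integral>\<omega>. g (X 0 \<omega>) \<partial>M)"
proof -
  have "(\<integral>\<omega>. g (X k \<omega>) \<partial>M) = integral\<^sup>L (distr M borel (X k)) g"
    by (rule integral_distr[symmetric]) auto
  also have "\<dots> = integral\<^sup>L (distr M borel (X 0)) g" by (simp add: distr_X[of k])
  also have "\<dots> = (\<integral>\<omega>. g (X 0 \<omega>) \<partial>M)" by (rule integral_distr) auto
  finally show ?thesis .
qed

lemma nn_integral_X:
  fixes g :: "real \<Rightarrow> ennreal" assumes [measurable]: "g \<in> borel_measurable borel"
  shows "(\<integral>\<^sup>+\<omega>. g (X k \<omega>) \<partial>M) = (\<integral>\<^sup>+\<omega>. g (X 0 \<omega>) \<partial>M)"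
proof -
  have "(\<integral>\<^sup>+\<omega>. g (X k \<omega>) \<partial>M) = integral\<^sup>N (distr M borel (X k)) g"
    by (rule nn_integral_distr[symmetric]) auto
  also have "\<dots> = integral\<^sup>N (distr M borel (X 0)) g" by (simp add: distr_X[of k])
  also have "\<dots> = (\<integral>\<^sup>+\<omega>. g (X 0 \<omega>) \<partial>M)" by (rule nn_integral_distr) auto
  finally show ?thesis .
qed

lemma integrable_X:
  fixes g :: "real \<Rightarrow> real" assumes [measurable]: "g \<in> borel_measurable borel"
    and "integrable M (\<lambda>\<omega>. g (X 0 \<omega>))"
  shows "integrable M (\<lambda>\<omega>. g (X k \<omega>))"
proof -
  have "integrable (distr M borel (X 0)) g" using assms by (subst integrable_distr_eq) auto
  then have "integrable (distr M borel (X k)) g" by (simp add: distr_X[of k])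
  then show ?thesis by (subst (asm) integrable_distr_eq) auto
qed

definition phi :: real where "phi = (\<integral>\<omega>. exp (- \<tau> 0 \<omega>) \<partial>M)"

lemma integrable_bounded:
  fixes g :: "'a \<Rightarrow> real"
  assumes "g \<in> borel_measurable M" "\<And>\<omega>. \<omega> \<in> space M \<Longrightarrow> \<bar>g \<omega>\<bar> \<le> B"
  shows "integrable M g"
  using assms by (intro integrable_const_bound[where B=B]) auto

lemma phi_nonneg: "0 \<le> phi"
  unfolding phi_def by (intro integral_nonneg_AE AE_I2) simp

lemma phi_less_1: "phi < 1"
proof -
  have "(\<integral>\<omega>. exp (- \<tau> 0 \<omega>) \<partial>M) < (\<integral>\<omega>. 1 \<partial>M)"
  proof (rule integral_less_AE_space)
    show "integrable M (\<lambda>\<omega>. exp (- \<tau> 0 \<omega>))"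
      by (rule integrable_bounded[where B=1]) (auto simp: tau_nonneg)
    show "AE \<omega> in M. exp (- \<tau> 0 \<omega>) < 1" using tau_pos by auto
  qed (auto simp: emeasure_space_1)
  then show ?thesis by (simp add: phi_def prob_space)
qed

lemma indep_tau: "indep_vars (\<lambda>_. borel) \<tau> J" if "J \<noteq> {}"
  using indep_vars_reindex[OF indepV, of Inl J] that by (simp add: V_def)

lemma exp_T: "(\<integral>\<omega>. exp (- T k \<omega>) \<partial>M) = phi ^ Suc k"
proof -
  have ind: "indep_vars (\<lambda>_. borel) (\<lambda>i \<omega>. exp (- \<tau> i \<omega>)) {..<Suc k}"
    by (rule indep_vars_compose2[OF indep_tau]) auto
  have "(\<integral>\<omega>. exp (- T k \<omega>) \<partial>M) = (\<integral>\<omega>. (\<Prod>i<Suc k. exp (- \<tau> i \<omega>)) \<partial>M)"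
  proof (rule Bochner_Integration.integral_cong)
    fix \<omega> show "exp (- T k \<omega>) = (\<Prod>i<Suc k. exp (- \<tau> i \<omega>))"
      unfolding T_def arrival_def sum_negf[symmetric] by (rule exp_sum) simp
  qed simp
  also have "\<dots> = (\<Prod>i<Suc k. \<integral>\<omega>. exp (- \<tau> i \<omega>) \<partial>M)"
    by (rule indep_vars_lebesgue_integral[OF _ ind])
       (auto intro!: integrable_bounded[where B=1] simp: tau_nonneg)
  also have "\<dots> = (\<Prod>i<Suc k. phi)"
    unfolding phi_def by (intro prod.cong refl integral_tau) auto
  finally show ?thesis by simp
qed

lemma prob_T_le: "prob {\<omega>\<in>space M. T k \<omega> \<le> s} \<le> exp s * phi ^ Suc k"
proof -
  have "prob {\<omega>\<in>space M. T k \<omega> \<le> s} = (\<integral>\<omega>. indicator {\<omega>\<in>space M. T k \<omega> \<le> s} \<omega> \<partial>M)"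
    by (simp add: Int_absorb2 Collect_subset)
  also have "\<dots> \<le> (\<integral>\<omega>. exp s * exp (- T k \<omega>) \<partial>M)"
  proof (rule integral_mono)
    show "integrable M (\<lambda>\<omega>. exp s * exp (- T k \<omega>))"
      by (intro integrable_mult_right integrable_bounded[where B=1]) (auto simp: T_nonneg)
    fix \<omega> assume "\<omega> \<in> space M"
    show "indicator {\<omega>\<in>space M. T k \<omega> \<le> s} \<omega> \<le> exp s * exp (- T k \<omega>)"
    proof (cases "T k \<omega> \<le> s")
      case True
      then have "1 \<le> exp (s - T k \<omega>)" by simp
      then have "1 \<le> exp s * exp (- T k \<omega>)" by (simp add: exp_diff exp_minus field_simps)
      then show ?thesis using True \<open>\<omega> \<in> space M\<close> by simp
    qed simp
  qed (auto intro!: integrable_bounded[where B=1])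
  also have "\<dots> = exp s * phi ^ Suc k" by (simp add: exp_T)
  finally show ?thesis .
qed

definition nu :: "real measure" where
  "nu = distr (count_space UNIV \<Otimes>\<^sub>M M) borel (\<lambda>(k, \<omega>). T k \<omega>)"

lemma meas_T_pair[measurable]: "(\<lambda>(k, \<omega>). T k \<omega>) \<in> borel_measurable (count_space UNIV \<Otimes>\<^sub>M M)"
  by (rule measurable_pair_measure_countable1) auto

lemma space_nu[simp]: "space nu = UNIV"
  by (simp add: nu_def)

lemma sets_nu[simp, measurable_cong]: "sets nu = sets borel"
  by (simp add: nu_def)

lemma nn_integral_nu:
  assumes [measurable]: "g \<in> borel_measurable borel"
  shows "(\<integral>\<^sup>+x. g x \<partial>nu) = (\<Sum>k. \<integral>\<^sup>+\<omega>. g (T k \<omega>) \<partial>M)"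
proof -
  have "(\<integral>\<^sup>+x. g x \<partial>nu) = (\<integral>\<^sup>+p. g (case p of (k, \<omega>) \<Rightarrow> T k \<omega>) \<partial>(count_space UNIV \<Otimes>\<^sub>M M))"
    unfolding nu_def by (rule nn_integral_distr) auto
  also have "\<dots> = (\<integral>\<^sup>+k. (\<integral>\<^sup>+\<omega>. g (T k \<omega>) \<partial>M) \<partial>count_space UNIV)"
    by (subst sigma_finite_measure.nn_integral_fst[symmetric])
       (auto simp: split_beta' intro: sigma_finite_measure_axioms
             intro!: measurable_pair_measure_countable1)
  also have "\<dots> = (\<Sum>k. \<integral>\<^sup>+\<omega>. g (T k \<omega>) \<partial>M)" by (rule nn_integral_count_space_nat)
  finally show ?thesis .
qed


lemma emeasure_nu_Iic: "emeasure nu {..s} = (\<Sum>k. emeasure M {\<omega>\<in>space M. T k \<omega> \<le> s})"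
proof -
  have "emeasure nu {..s} = (\<integral>\<^sup>+x. indicator {..s} x \<partial>nu)"
    by (rule nn_integral_indicator[symmetric]) simp
  also have "\<dots> = (\<Sum>k. \<integral>\<^sup>+\<omega>. indicator {..s} (T k \<omega>) \<partial>M)"
    by (rule nn_integral_nu) simp
  also have "\<dots> = (\<Sum>k. emeasure M {\<omega>\<in>space M. T k \<omega> \<le> s})"
  proof (intro suminf_cong)
    fix k
    have "(\<integral>\<^sup>+\<omega>. indicator {..s} (T k \<omega>) \<partial>M) = (\<integral>\<^sup>+\<omega>. indicator {\<omega>\<in>space M. T k \<omega> \<le> s} \<omega> \<partial>M)"
      by (intro nn_integral_cong) (auto simp: indicator_def)
    also have "\<dots> = emeasure M {\<omega>\<in>space M. T k \<omega> \<le> s}" by (rule nn_integral_indicator) simp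
    finally show "(\<integral>\<^sup>+\<omega>. indicator {..s} (T k \<omega>) \<partial>M) = emeasure M {\<omega>\<in>space M. T k \<omega> \<le> s}" .
  qed
  finally show ?thesis .
qed

lemma summable_geom_T: "summable (\<lambda>k. exp s * phi ^ Suc k)"
  using phi_nonneg phi_less_1
  by (intro summable_mult summable_ignore_initial_segment[where k=1, simplified]
        summable_geometric) auto

lemma emeasure_nu_fin: "emeasure nu {..s} < \<infinity>"
proof -
  have "emeasure nu {..s} \<le> (\<Sum>k. ennreal (exp s * phi ^ Suc k))"
    unfolding emeasure_nu_Iic
  proof (intro suminf_le summableI)
    fix k show "emeasure M {\<omega>\<in>space M. T k \<omega> \<le> s} \<le> ennreal (exp s * phi ^ Suc k)"
      using prob_T_le[of k s] by (simp add: emeasure_eq_measure ennreal_leI)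
  qed
  also have "\<dots> = ennreal (\<Sum>k. exp s * phi ^ Suc k)"
    using phi_nonneg by (intro suminf_ennreal2 summable_geom_T) auto
  finally show ?thesis using ennreal_less_top le_less_trans infinity_ennreal_def by metis
qed

definition cntT :: "real \<Rightarrow> 'a \<Rightarrow> ennreal" where
  "cntT s \<omega> = (\<Sum>k. indicator {..s} (T k \<omega>))"

lemma cntT_meas[measurable]: "cntT s \<in> borel_measurable M"
  unfolding cntT_def by measurable

lemma cntT_eq: "cntT s \<omega> = emeasure (count_space UNIV) {k. T k \<omega> \<le> s}"
  unfolding cntT_def suminf_indicator_count_space[symmetric]
  by (intro suminf_cong) (auto simp: indicator_def)

lemma nn_integral_cntT: "(\<integral>\<^sup>+\<omega>. cntT s \<omega> \<partial>M) = emeasure nu {..s}"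
proof -
  have "(\<integral>\<^sup>+\<omega>. cntT s \<omega> \<partial>M) = (\<Sum>k. \<integral>\<^sup>+\<omega>. indicator {..s} (T k \<omega>) \<partial>M)"
    unfolding cntT_def by (rule nn_integral_suminf) simp
  also have "\<dots> = emeasure nu {..s}"
    by (subst nn_integral_nu[symmetric]) (auto intro: nn_integral_indicator)
  finally show ?thesis .
qed

lemma AE_cntT_fin: "AE \<omega> in M. cntT s \<omega> \<noteq> \<infinity>"
  using emeasure_nu_fin[of s] by (intro nn_integral_PInf_AE) (auto simp: nn_integral_cntT)

lemma AE_good: "AE \<omega> in M. good s (Vs \<omega>)"
  using AE_cntT_fin[of s] AE_space
proof eventually_elim
  case (elim \<omega>)
  then have "finite {k. T k \<omega> \<le> s}" unfolding cntT_eq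
    by (cases "finite {k. T k \<omega> \<le> s}") (auto simp: emeasure_count_space)
  then show ?case using tt_pos[of \<omega>] elim by (simp add: good_def Arr_Vs_T)
qed


lemma renewal_fun_eq: "renewal_fun M \<tau> s = measure nu {..s}"
proof -
  have card_eq: "real (renewal_count \<tau> s \<omega>) = enn2real (cntT s \<omega>)" for \<omega>
  proof -
    have "{i. 1 \<le> i \<and> arrival \<tau> i \<omega> \<le> s} = Suc ` {k. T k \<omega> \<le> s}"
      by (auto simp: T_def image_iff intro: exI[of _ "i - 1" for i] elim!: Suc_le_D[THEN exE])
    then have "renewal_count \<tau> s \<omega> = card {k. T k \<omega> \<le> s}"
      by (simp add: renewal_count_def card_image)
    then show ?thesis using real_card_enn2real[of "{k. T k \<omega> \<le> s}"]
      unfolding cntT_eq suminf_indicator_count_space[symmetric] by simp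
  qed
  have "renewal_fun M \<tau> s = (\<integral>\<omega>. enn2real (cntT s \<omega>) \<partial>M)"
    unfolding renewal_fun_def card_eq ..
  also have "\<dots> = enn2real (\<integral>\<^sup>+\<omega>. ennreal (enn2real (cntT s \<omega>)) \<partial>M)"
    by (rule integral_eq_nn_integral) auto
  also have "(\<integral>\<^sup>+\<omega>. ennreal (enn2real (cntT s \<omega>)) \<partial>M) = (\<integral>\<^sup>+\<omega>. cntT s \<omega> \<partial>M)"
    using AE_cntT_fin[of s] by (intro nn_integral_cong_AE) (auto simp: ennreal_enn2real_if)
  also have "\<dots> = emeasure nu {..s}" by (rule nn_integral_cntT)
  finally show ?thesis by (simp add: measure_def)
qed

lemma nu_Iic_eq: "emeasure nu {..s} = ennreal (measure nu {..s})"
  using emeasure_nu_fin[of s] by (intro emeasure_eq_ennreal_measure) simp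

lemma mfun_mono: "x \<le> y \<Longrightarrow> measure nu {..x} \<le> measure nu {..y}"
  using emeasure_mono[of "{..x}" "{..y}" nu] by (simp add: nu_Iic_eq)

lemma mfun_nonneg: "0 \<le> measure nu {..x}"
  by simp

lemma mfun_right_cont: "continuous (at_right a) (\<lambda>s. measure nu {..s})"
proof -
  define Ma where "Ma = density nu (indicator {..a+1})"
  have sMa: "sets Ma = sets borel" by (simp add: Ma_def)
  have eMa: "emeasure Ma A = emeasure nu ({..a+1} \<inter> A)" if "A \<in> sets borel" for A
    unfolding Ma_def using that by (intro emeasure_restricted) auto
  have fm: "finite_measure Ma"
    by (rule finite_measureI) (use eMa[of UNIV] emeasure_nu_fin[of "a+1"] in \<open>simp add: Ma_def\<close>)
  interpret Ma: finite_borel_measure Ma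
    using fm sMa by (simp add: finite_borel_measure_def finite_borel_measure_axioms_def)
  have cdf_eq: "cdf Ma x = measure nu {..x}" if "x \<le> a + 1" for x
    using eMa[of "{..x}"] that by (simp add: cdf_def measure_def Int_absorb1)
  have "continuous (at_right a) (cdf Ma)" by (rule Ma.cdf_is_right_cont)
  then have "(cdf Ma \<longlongrightarrow> cdf Ma a) (at_right a)" by (simp add: continuous_within)
  moreover have ev: "eventually (\<lambda>x. cdf Ma x = measure nu {..x}) (at_right a)"
    by (rule eventually_at_rightI[where b="a + 1"]) (auto intro!: cdf_eq)
  ultimately have "((\<lambda>s. measure nu {..s}) \<longlongrightarrow> measure nu {..a}) (at_right a)"
    using cdf_eq[of a] by (simp add: tendsto_cong[OF ev])
  then show ?thesis by (simp add: continuous_within)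
qed

definition mfun :: "real \<Rightarrow> real" where "mfun s = measure nu {..s}"

lemma density_IM_nu:
  "density (interval_measure mfun) (indicator {..t}) = density nu (indicator {..t})"
proof (rule measure_eqI_lessThan)
  show "sets (density (interval_measure mfun) (indicator {..t})) = sets borel" by simp
  show "sets (density nu (indicator {..t})) = sets borel" by simp
  have mono: "\<And>x y. x \<le> y \<Longrightarrow> mfun x \<le> mfun y" by (simp add: mfun_def mfun_mono)
  have rc: "\<And>a. continuous (at_right a) mfun"
    unfolding mfun_def[abs_def] by (rule mfun_right_cont)
  have nuI: "emeasure nu ({..t} \<inter> {x<..}) = (if x < t then ennreal (mfun t - mfun x) else 0)" for x
  proof (cases "x < t")
    case True
    have "{..t} \<inter> {x<..} = {..t} - {..x}" by auto
    then have "emeasure nu ({..t} \<inter> {x<..}) = emeasure nu {..t} - emeasure nu {..x}"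
      using True emeasure_nu_fin[of x] by (simp add: emeasure_Diff less_top)
    also have "\<dots> = ennreal (mfun t - mfun x)"
      using mono[of x t] True by (simp add: nu_Iic_eq mfun_def ennreal_minus)
    finally show ?thesis using True by simp
  next
    case False then have "{..t} \<inter> {x<..} = {}" by auto
    then show ?thesis using False by simp
  qed
  have IMI: "emeasure (interval_measure mfun) ({..t} \<inter> {x<..}) = (if x < t then ennreal (mfun t - mfun x) else 0)" for x
  proof (cases "x < t")
    case True
    have "{..t} \<inter> {x<..} = {x<..t}" by auto
    then show ?thesis using True
      by (simp add: emeasure_interval_measure_Ioc[OF _ mono rc])
  next
    case False then have "{..t} \<inter> {x<..} = {}" by auto
    then show ?thesis using False by simp
  qed
  fix x :: real
  show "emeasure (density (interval_measure mfun) (indicator {..t})) {x<..} < \<infinity>"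
    by (subst emeasure_restricted) (auto simp: IMI)
  show "emeasure (density (interval_measure mfun) (indicator {..t})) {x<..} =
        emeasure (density nu (indicator {..t})) {x<..}"
    by (subst (1 2) emeasure_restricted) (auto simp: IMI nuI)
qed


lemma pair_sf: "pair_sigma_finite (count_space (UNIV::nat set)) M"
  unfolding pair_sigma_finite_def
  using prob_space_imp_sigma_finite[OF prob_space_axioms]
  by (simp add: sigma_finite_measure_count_space_countable)

lemma sums_T_IM:
  fixes G :: "real \<Rightarrow> real"
  assumes Gm[measurable]: "G \<in> borel_measurable borel" and bnd: "\<And>x. \<bar>G x\<bar> \<le> c"
    and supp: "\<And>x. t < x \<Longrightarrow> G x = 0"
  shows "(\<lambda>k. \<integral>\<omega>. G (T k \<omega>) \<partial>M) sums (\<integral>x. G x \<partial>interval_measure mfun)"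
proof -
  let ?IM = "interval_measure mfun"
  have GI: "G x = indicator {..t} x * G x" for x using supp[of x] by (auto simp: indicator_def)
  have dens: "(\<lambda>x. ennreal (indicator {..t} x)) = indicator {..t}" by (auto simp: indicator_def)
  have "(\<integral>x. G x \<partial>?IM) = (\<integral>x. indicator {..t} x * G x \<partial>?IM)" by (subst GI) simp
  also have "\<dots> = integral\<^sup>L (density ?IM (\<lambda>x. ennreal (indicator {..t} x))) G"
    by (rule integral_real_density[symmetric]) auto
  also have "\<dots> = integral\<^sup>L (density nu (\<lambda>x. ennreal (indicator {..t} x))) G"
    unfolding dens density_IM_nu ..
  also have "\<dots> = (\<integral>x. indicator {..t} x * G x \<partial>nu)"
    by (rule integral_real_density) auto
  also have "\<dots> = (\<integral>x. G x \<partial>nu)" by (subst (2) GI) simp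
  finally have e1: "(\<integral>x. G x \<partial>?IM) = (\<integral>x. G x \<partial>nu)" .
  have int_nu: "integrable nu G"
  proof (rule Bochner_Integration.integrable_bound)
    show "integrable nu (\<lambda>x. c * indicator {..t} x)"
      using emeasure_nu_fin[of t] by (intro integrable_mult_right integrable_real_indicator) auto
    show "AE x in nu. norm (G x) \<le> norm (c * indicator {..t} x)"
    proof (rule AE_I2)
      fix x
      have c: "0 \<le> c" using bnd[of x] by simp
      show "norm (G x) \<le> norm (c * indicator {..t} x)"
        using bnd[of x] supp[of x] c by (auto simp: indicator_def)
    qed
  qed simp
  have int_pair: "integrable (count_space UNIV \<Otimes>\<^sub>M M) (\<lambda>(k, \<omega>). G (T k \<omega>))"
    using int_nu unfolding nu_def by (subst (asm) integrable_distr_eq) (auto simp: split_beta')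
  have e2: "(\<integral>x. G x \<partial>nu) = (\<integral>p. (\<lambda>(k, \<omega>). G (T k \<omega>)) p \<partial>(count_space UNIV \<Otimes>\<^sub>M M))"
    unfolding nu_def by (subst integral_distr) (auto simp: split_beta')
  also have "\<dots> = (\<integral>k. (\<integral>\<omega>. G (T k \<omega>) \<partial>M) \<partial>count_space UNIV)"
    using pair_sigma_finite.integral_fst'[OF pair_sf int_pair] by simp
  finally have e3: "(\<integral>x. G x \<partial>nu) = (\<integral>k. (\<integral>\<omega>. G (T k \<omega>) \<partial>M) \<partial>count_space UNIV)" .
  have "integrable (count_space UNIV) (\<lambda>k. \<integral>\<omega>. G (T k \<omega>) \<partial>M)"
    using pair_sigma_finite.integrable_fst'[OF pair_sf int_pair] by simp
  from sums_integral_count_space_nat[OF this]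
  show ?thesis unfolding e1 e3 .
qed

end

definition ext :: "idx set \<Rightarrow> (idx \<Rightarrow> real) \<Rightarrow> (idx \<Rightarrow> real)" where
  "ext B u = (\<lambda>i. if i \<in> B then u i else 0)"

lemma meas_ext[measurable]: "ext B \<in> measurable (PiM B (\<lambda>_. borel)) SS"
  unfolding ext_def
proof (rule measurable_PiM_single')
  fix i :: idx
  show "(\<lambda>u. if i \<in> B then u i else 0) \<in> borel_measurable (PiM B (\<lambda>_. borel))"
    by (cases "i \<in> B") auto
qed (auto simp: space_PiM)

lemma ext_restrict: "ext B (restrict y B) = (\<lambda>i. if i \<in> B then y i else 0)"
  by (auto simp: ext_def)

definition cntS :: "real \<Rightarrow> (idx \<Rightarrow> real) \<Rightarrow> ennreal" where
  "cntS t y = (\<Sum>k. indicator {..t} (Arr y (Suc k)))"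

lemma meas_cntS[measurable]: "cntS t \<in> borel_measurable SS"
  unfolding cntS_def by measurable

lemma Arr_ext_Inl: "Arr (ext (range Inl) (restrict y (range Inl))) k = Arr y k"
  by (simp add: Arr_def tt_def ext_restrict)

lemma cntS_ext_Inl: "cntS t (ext (range Inl) (restrict y (range Inl))) = cntS t y"
  by (simp add: cntS_def Arr_ext_Inl)

lemma pow_le_sum_shift:
  "(1 + real K) ^ q \<le> 1 + (\<Sum>k<K. (real k + 2) ^ q)"
proof (cases K)
  case 0 then show ?thesis by simp
next
  case (Suc K')
  have "(1 + real K) ^ q = (real K' + 2) ^ q" using Suc by (simp add: add.commute)
  also have "\<dots> \<le> (\<Sum>k<K. (real k + 2) ^ q)"
    using Suc by (intro member_le_sum) auto
  finally show ?thesis by simp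
qed

lemma summable_poly_geom:
  fixes p :: real assumes p: "0 \<le> p" "p < 1"
  shows "summable (\<lambda>k. (real k + 2) ^ q * p ^ Suc k)"
proof (cases "p = 0")
  case True then show ?thesis by simp
next
  case False
  define r where "r = sqrt p"
  have r: "0 < r" "r < 1" using p False by (auto simp: r_def)
  have pr: "p = r * r" using p by (simp add: r_def)
  have lim: "((\<lambda>k. (real k + 2) ^ q * r ^ k) \<longlongrightarrow> 0) at_top"
    using r by real_asymp
  then have ev: "eventually (\<lambda>k. (real k + 2) ^ q * r ^ k < 1) at_top"
    by (rule order_tendstoD) simp
  show ?thesis
  proof (rule summable_comparison_test_ev)
    show "summable (\<lambda>k. p * r ^ k)" using r by (intro summable_mult summable_geometric) auto
    show "\<forall>\<^sub>F k in sequentially. norm ((real k + 2) ^ q * p ^ Suc k) \<le> p * r ^ k"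
      using ev
    proof eventually_elim
      case (elim k)
      have "norm ((real k + 2) ^ q * p ^ Suc k) = p * (((real k + 2) ^ q * r ^ k) * r ^ k)"
        using p by (simp add: pr power_mult_distrib abs_mult mult_ac)
      also have "\<dots> \<le> p * (1 * r ^ k)"
        using elim r p by (intro mult_left_mono mult_right_mono) auto
      finally show ?case by simp
    qed
  qed
qed

lemma (in prob_space) indep_var_nn_integral_enn:
  fixes A B :: "'a \<Rightarrow> ennreal"
  assumes ind: "indep_var borel A borel B"
  shows "(\<integral>\<^sup>+\<omega>. A \<omega> * B \<omega> \<partial>M) = (\<integral>\<^sup>+\<omega>. A \<omega> \<partial>M) * (\<integral>\<^sup>+\<omega>. B \<omega> \<partial>M)"
proof -
  have e: "(\<lambda>_::bool. borel) = case_bool borel borel" by (rule ext) (simp split: bool.split)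
  have "indep_vars (\<lambda>_. borel) (case_bool A B) UNIV"
    using ind unfolding indep_var_def e .
  from indep_vars_nn_integral[OF _ this]
  have "(\<integral>\<^sup>+\<omega>. (\<Prod>i\<in>UNIV. case_bool A B i \<omega>) \<partial>M) = (\<Prod>i\<in>UNIV. \<integral>\<^sup>+\<omega>. case_bool A B i \<omega> \<partial>M)"
    by simp
  then show ?thesis by (simp add: UNIV_bool mult.commute)
qed

context ibnr
begin

lemma indep_tau_X:
  fixes g1 :: "(idx \<Rightarrow> real) \<Rightarrow> ennreal" and g2 :: "real \<Rightarrow> ennreal"
  assumes [measurable]: "g1 \<in> borel_measurable SS" "g2 \<in> borel_measurable borel"
  shows "indep_var borel (\<lambda>\<omega>. g1 (ext (range Inl) (restrict (Vs \<omega>) (range Inl)))) borel (\<lambda>\<omega>. g2 (X k \<omega>))"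
proof -
  have "indep_var (PiM (range Inl) (\<lambda>_. borel)) (\<lambda>\<omega>. restrict (\<lambda>i. V i \<omega>) (range Inl))
                  (PiM {Inr (Inl k)} (\<lambda>_. borel)) (\<lambda>\<omega>. restrict (\<lambda>i. V i \<omega>) {Inr (Inl k)})"
    by (rule indep_var_restrict[OF indepV]) auto
  then have "indep_var borel ((\<lambda>u. g1 (ext (range Inl) u)) \<circ> (\<lambda>\<omega>. restrict (\<lambda>i. V i \<omega>) (range Inl)))
                  borel ((\<lambda>u. g2 (u (Inr (Inl k)))) \<circ> (\<lambda>\<omega>. restrict (\<lambda>i. V i \<omega>) {Inr (Inl k)}))"
    by (rule indep_var_compose) measurable
  then show ?thesis by (simp add: comp_def Vs_def[abs_def] V_def)
qed

lemma cntT_cntS: "cntT t \<omega> = cntS t (Vs \<omega>)"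
  by (simp add: cntT_def cntS_def Arr_Vs_T)

lemma cntT_good: "good t (Vs \<omega>) \<Longrightarrow> cntT t \<omega> = of_nat (Nc t (Vs \<omega>))"
  unfolding cntT_eq Nc_def good_def by (simp add: Arr_Vs_T emeasure_count_space)

lemma ind_T_Nc: "good t (Vs \<omega>) \<Longrightarrow> T k \<omega> \<le> t \<longleftrightarrow> k < Nc t (Vs \<omega>)"
  using good_Nc_iff[of t "Vs \<omega>" k] by (simp add: Arr_Vs_T)

lemma moment_cnt: "(\<integral>\<^sup>+\<omega>. (1 + cntT t \<omega>) ^ q \<partial>M) < \<infinity>"
proof -
  let ?c = "\<lambda>k. (real k + 2) ^ q"
  have "(\<integral>\<^sup>+\<omega>. (1 + cntT t \<omega>) ^ q \<partial>M) \<le>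
        (\<integral>\<^sup>+\<omega>. 1 + (\<Sum>k. ennreal (?c k) * indicator {..t} (T k \<omega>)) \<partial>M)"
  proof (rule nn_integral_mono_AE)
    show "AE \<omega> in M. (1 + cntT t \<omega>) ^ q \<le> 1 + (\<Sum>k. ennreal (?c k) * indicator {..t} (T k \<omega>))"
      using AE_good[of t]
    proof eventually_elim
      case (elim \<omega>)
      let ?K = "Nc t (Vs \<omega>)"
      have s: "(\<Sum>k. ennreal (?c k) * indicator {..t} (T k \<omega>)) = (\<Sum>k<?K. ennreal (?c k))"
        by (subst suminf_finite[where N="{..<?K}"]) (auto simp: ind_T_Nc[OF elim] indicator_def)
      have "(1 + cntT t \<omega>) ^ q = ennreal ((1 + real ?K) ^ q)"
        by (simp add: cntT_good[OF elim] ennreal_power[symmetric] ennreal_of_nat_eq_real_of_nat)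
      also have "\<dots> \<le> ennreal (1 + (\<Sum>k<?K. ?c k))"
        by (rule ennreal_leI) (rule pow_le_sum_shift)
      also have "\<dots> = 1 + (\<Sum>k<?K. ennreal (?c k))"
        by (subst ennreal_plus) (auto intro!: sum_nonneg)
      finally show ?case unfolding s .
    qed
  qed
  also have "\<dots> = 1 + (\<Sum>k. ennreal (?c k) * emeasure M {\<omega>\<in>space M. T k \<omega> \<le> t})"
  proof -
    have "(\<integral>\<^sup>+\<omega>. 1 + (\<Sum>k. ennreal (?c k) * indicator {..t} (T k \<omega>)) \<partial>M) =
          (\<integral>\<^sup>+\<omega>. 1 \<partial>M) + (\<integral>\<^sup>+\<omega>. (\<Sum>k. ennreal (?c k) * indicator {..t} (T k \<omega>)) \<partial>M)"
      by (rule nn_integral_add) auto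
    also have "(\<integral>\<^sup>+\<omega>. (\<Sum>k. ennreal (?c k) * indicator {..t} (T k \<omega>)) \<partial>M) =
               (\<Sum>k. \<integral>\<^sup>+\<omega>. ennreal (?c k) * indicator {..t} (T k \<omega>) \<partial>M)"
      by (rule nn_integral_suminf) auto
    also have "\<dots> = (\<Sum>k. ennreal (?c k) * emeasure M {\<omega>\<in>space M. T k \<omega> \<le> t})"
    proof (intro suminf_cong)
      fix k
      have "(\<integral>\<^sup>+\<omega>. ennreal (?c k) * indicator {..t} (T k \<omega>) \<partial>M) =
            (\<integral>\<^sup>+\<omega>. ennreal (?c k) * indicator {\<omega>\<in>space M. T k \<omega> \<le> t} \<omega> \<partial>M)"
        by (intro nn_integral_cong) (auto simp: indicator_def)
      also have "\<dots> = ennreal (?c k) * emeasure M {\<omega>\<in>space M. T k \<omega> \<le> t}"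
        by (subst nn_integral_cmult) auto
      finally show "(\<integral>\<^sup>+\<omega>. ennreal (?c k) * indicator {..t} (T k \<omega>) \<partial>M) =
            ennreal (?c k) * emeasure M {\<omega>\<in>space M. T k \<omega> \<le> t}" .
    qed
    finally show ?thesis by (simp add: emeasure_space_1)
  qed
  also have "\<dots> \<le> 1 + (\<Sum>k. ennreal (exp t * (?c k * phi ^ Suc k)))"
  proof (intro add_left_mono suminf_le summableI)
    fix k
    have "emeasure M {\<omega>\<in>space M. T k \<omega> \<le> t} \<le> ennreal (exp t * phi ^ Suc k)"
      using prob_T_le[of k t] by (simp add: emeasure_eq_measure ennreal_leI)
    then have "ennreal (?c k) * emeasure M {\<omega>\<in>space M. T k \<omega> \<le> t} \<le> ennreal (?c k) * ennreal (exp t * phi ^ Suc k)"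
      by (rule mult_left_mono) simp
    also have "\<dots> = ennreal (exp t * (?c k * phi ^ Suc k))"
      using phi_nonneg by (simp add: ennreal_mult[symmetric] mult_ac)
    finally show "ennreal (?c k) * emeasure M {\<omega>\<in>space M. T k \<omega> \<le> t} \<le> ennreal (exp t * (?c k * phi ^ Suc k))" .
  qed
  also have "\<dots> = 1 + ennreal (\<Sum>k. exp t * (?c k * phi ^ Suc k))"
    using phi_nonneg phi_less_1 summable_poly_geom[OF phi_nonneg phi_less_1, of q]
    by (subst suminf_ennreal2) (auto intro!: summable_mult simp del: power_Suc)
  also have "\<dots> < \<infinity>" by (simp add: ennreal_plus[symmetric] del: ennreal_plus)
  finally show ?thesis .
qed


lemma moment_cntX:
  assumes Xn: "integrable M (\<lambda>\<omega>. \<bar>X 0 \<omega>\<bar> ^ n)"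
  shows "(\<integral>\<^sup>+\<omega>. (1 + cntT t \<omega>) ^ q * (\<Sum>k. indicator {..t} (T k \<omega>) * ennreal ((1 + \<bar>X k \<omega>\<bar>) ^ n)) \<partial>M) < \<infinity>"
proof -
  define CX where "CX = (\<integral>\<^sup>+\<omega>. ennreal ((1 + \<bar>X 0 \<omega>\<bar>) ^ n) \<partial>M)"
  have CX: "CX < \<infinity>"
  proof -
    have "CX \<le> (\<integral>\<^sup>+\<omega>. ennreal (2 ^ n * (1 + \<bar>X 0 \<omega>\<bar> ^ n)) \<partial>M)"
      unfolding CX_def
    proof (intro nn_integral_mono ennreal_leI)
      fix \<omega>
      have "(1 + \<bar>X 0 \<omega>\<bar>) ^ n \<le> (2 * max 1 \<bar>X 0 \<omega>\<bar>) ^ n" by (intro power_mono) auto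
      also have "\<dots> = 2 ^ n * max 1 \<bar>X 0 \<omega>\<bar> ^ n" by (simp add: power_mult_distrib)
      also have "max 1 \<bar>X 0 \<omega>\<bar> ^ n \<le> 1 + \<bar>X 0 \<omega>\<bar> ^ n"
        by (cases "1 \<le> \<bar>X 0 \<omega>\<bar>") (auto simp: max_def intro: power_le_one)
      finally show "(1 + \<bar>X 0 \<omega>\<bar>) ^ n \<le> 2 ^ n * (1 + \<bar>X 0 \<omega>\<bar> ^ n)" by simp
    qed
    also have "\<dots> < \<infinity>"
    proof -
      have "integrable M (\<lambda>\<omega>. 2 ^ n * (1 + \<bar>X 0 \<omega>\<bar> ^ n))" using Xn by auto
      from integrable_iff_bounded[THEN iffD1, OF this, THEN conjunct2]
      have "(\<integral>\<^sup>+\<omega>. ennreal (norm (2 ^ n * (1 + \<bar>X 0 \<omega>\<bar> ^ n))) \<partial>M) < \<infinity>" .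
      moreover have "(\<lambda>\<omega>. norm (2 ^ n * (1 + \<bar>X 0 \<omega>\<bar> ^ n))) = (\<lambda>\<omega>. 2 ^ n * (1 + \<bar>X 0 \<omega>\<bar> ^ n :: real))"
        by (rule ext) (simp add: abs_mult)
      ultimately show ?thesis by simp
    qed
    finally show ?thesis .
  qed
  have "(\<integral>\<^sup>+\<omega>. (1 + cntT t \<omega>) ^ q * (\<Sum>k. indicator {..t} (T k \<omega>) * ennreal ((1 + \<bar>X k \<omega>\<bar>) ^ n)) \<partial>M)
     = (\<integral>\<^sup>+\<omega>. (\<Sum>k. ((1 + cntT t \<omega>) ^ q * indicator {..t} (T k \<omega>)) * ennreal ((1 + \<bar>X k \<omega>\<bar>) ^ n)) \<partial>M)"
    by (simp add: ennreal_suminf_cmult[symmetric] mult_ac)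
  also have "\<dots> = (\<Sum>k. \<integral>\<^sup>+\<omega>. ((1 + cntT t \<omega>) ^ q * indicator {..t} (T k \<omega>)) * ennreal ((1 + \<bar>X k \<omega>\<bar>) ^ n) \<partial>M)"
    by (rule nn_integral_suminf) auto
  also have "\<dots> = (\<Sum>k. (\<integral>\<^sup>+\<omega>. (1 + cntT t \<omega>) ^ q * indicator {..t} (T k \<omega>) \<partial>M) * CX)"
  proof (intro suminf_cong)
    fix k
    have ind: "indep_var borel (\<lambda>\<omega>. (\<lambda>y. (1 + cntS t y) ^ q * indicator {..t} (Arr y (Suc k))) (ext (range Inl) (restrict (Vs \<omega>) (range Inl))))
                 borel (\<lambda>\<omega>. (\<lambda>x. ennreal ((1 + \<bar>x\<bar>) ^ n)) (X k \<omega>))"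
      by (rule indep_tau_X) measurable
    have "(\<integral>\<^sup>+\<omega>. ((1 + cntT t \<omega>) ^ q * indicator {..t} (T k \<omega>)) * ennreal ((1 + \<bar>X k \<omega>\<bar>) ^ n) \<partial>M) =
          (\<integral>\<^sup>+\<omega>. (1 + cntT t \<omega>) ^ q * indicator {..t} (T k \<omega>) \<partial>M) * (\<integral>\<^sup>+\<omega>. ennreal ((1 + \<bar>X k \<omega>\<bar>) ^ n) \<partial>M)"
      using indep_var_nn_integral_enn[OF ind]
      by (simp add: cntS_ext_Inl Arr_ext_Inl cntT_cntS[symmetric] Arr_Vs_T)
    also have "(\<integral>\<^sup>+\<omega>. ennreal ((1 + \<bar>X k \<omega>\<bar>) ^ n) \<partial>M) = CX"
      unfolding CX_def by (rule nn_integral_X) simp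
    finally show "(\<integral>\<^sup>+\<omega>. ((1 + cntT t \<omega>) ^ q * indicator {..t} (T k \<omega>)) * ennreal ((1 + \<bar>X k \<omega>\<bar>) ^ n) \<partial>M) =
          (\<integral>\<^sup>+\<omega>. (1 + cntT t \<omega>) ^ q * indicator {..t} (T k \<omega>) \<partial>M) * CX" .
  qed
  also have "\<dots> = (\<Sum>k. \<integral>\<^sup>+\<omega>. (1 + cntT t \<omega>) ^ q * indicator {..t} (T k \<omega>) \<partial>M) * CX"
    by (rule ennreal_suminf_multc)
  also have "(\<Sum>k. \<integral>\<^sup>+\<omega>. (1 + cntT t \<omega>) ^ q * indicator {..t} (T k \<omega>) \<partial>M) =
             (\<integral>\<^sup>+\<omega>. (\<Sum>k. (1 + cntT t \<omega>) ^ q * indicator {..t} (T k \<omega>)) \<partial>M)"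
    by (rule nn_integral_suminf[symmetric]) auto
  also have "\<dots> = (\<integral>\<^sup>+\<omega>. (1 + cntT t \<omega>) ^ q * cntT t \<omega> \<partial>M)"
    by (simp add: ennreal_suminf_cmult cntT_def)
  also have "\<dots> \<le> (\<integral>\<^sup>+\<omega>. (1 + cntT t \<omega>) ^ Suc q \<partial>M)"
  proof (intro nn_integral_mono)
    fix \<omega>
    have "(1 + cntT t \<omega>) ^ q * cntT t \<omega> \<le> (1 + cntT t \<omega>) ^ q * (1 + cntT t \<omega>)"
      by (intro mult_left_mono) auto
    then show "(1 + cntT t \<omega>) ^ q * cntT t \<omega> \<le> (1 + cntT t \<omega>) ^ Suc q" by (simp add: mult.commute)
  qed
  finally have le: "(\<integral>\<^sup>+\<omega>. (1 + cntT t \<omega>) ^ q * (\<Sum>k. indicator {..t} (T k \<omega>) * ennreal ((1 + \<bar>X k \<omega>\<bar>) ^ n)) \<partial>M)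
      \<le> (\<integral>\<^sup>+\<omega>. (1 + cntT t \<omega>) ^ Suc q \<partial>M) * CX"
    by (simp add: mult_right_mono)
  have "(\<integral>\<^sup>+\<omega>. (1 + cntT t \<omega>) ^ Suc q \<partial>M) * CX < \<infinity>"
    using moment_cnt[of t "Suc q"] CX by (simp add: ennreal_mult_less_top)
  then show ?thesis using le by (rule le_less_trans[rotated])
qed


lemma integrable_Dmm:
  assumes Xn: "integrable M (\<lambda>\<omega>. \<bar>X 0 \<omega>\<bar> ^ n)"
  shows "integrable M (\<lambda>\<omega>. Dmm n t (Vs \<omega>))"
proof (rule integrableI_bounded)
  show "(\<lambda>\<omega>. Dmm n t (Vs \<omega>)) \<in> borel_measurable M" by measurable
  define SXe where "SXe \<omega> = (\<Sum>k. indicator {..t} (T k \<omega>) * ennreal ((1 + \<bar>X k \<omega>\<bar>) ^ n))" for \<omega>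
  have "(\<integral>\<^sup>+\<omega>. ennreal (norm (Dmm n t (Vs \<omega>))) \<partial>M) =
        (\<integral>\<^sup>+\<omega>. ennreal (2 ^ n) * ((1 + cntT t \<omega>) ^ (n + 1) + (1 + cntT t \<omega>) ^ (n + 1) * SXe \<omega>) \<partial>M)"
  proof (rule nn_integral_cong_AE)
    show "AE \<omega> in M. ennreal (norm (Dmm n t (Vs \<omega>))) =
        ennreal (2 ^ n) * ((1 + cntT t \<omega>) ^ (n + 1) + (1 + cntT t \<omega>) ^ (n + 1) * SXe \<omega>)"
      using AE_good[of t]
    proof eventually_elim
      case (elim \<omega>)
      let ?K = "Nc t (Vs \<omega>)"
      have S: "SXe \<omega> = (\<Sum>j<?K. ennreal ((1 + \<bar>X j \<omega>\<bar>) ^ n))"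
        unfolding SXe_def
        by (subst suminf_finite[where N="{..<?K}"]) (auto simp: ind_T_Nc[OF elim] indicator_def)
      have S2: "(\<Sum>j<?K. ennreal ((1 + \<bar>X j \<omega>\<bar>) ^ n)) = ennreal (\<Sum>j<?K. (1 + \<bar>X j \<omega>\<bar>) ^ n)"
        by (rule sum_ennreal) auto
      have D: "Dmm n t (Vs \<omega>) = 2 ^ n * (1 + real ?K) ^ (n + 1) * (1 + (\<Sum>j<?K. (1 + \<bar>X j \<omega>\<bar>) ^ n))"
        by (simp add: Dmm_good[OF elim] Dm_def)
      have nn: "0 \<le> (\<Sum>j<?K. (1 + \<bar>X j \<omega>\<bar>) ^ n)" by (intro sum_nonneg) auto
      have "ennreal (norm (Dmm n t (Vs \<omega>))) = ennreal (2 ^ n) * ennreal ((1 + real ?K) ^ (n + 1)) *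
              ennreal (1 + (\<Sum>j<?K. (1 + \<bar>X j \<omega>\<bar>) ^ n))"
        unfolding D using nn by (simp add: abs_mult ennreal_mult)
      also have "ennreal ((1 + real ?K) ^ (n + 1)) = (1 + cntT t \<omega>) ^ (n + 1)"
      proof -
        have "ennreal ((1 + real ?K) ^ (n + 1)) = ennreal (1 + real ?K) ^ (n + 1)"
          by (rule ennreal_power[symmetric]) simp
        also have "ennreal (1 + real ?K) = 1 + cntT t \<omega>"
          by (simp add: cntT_good[OF elim] ennreal_of_nat_eq_real_of_nat ennreal_plus)
        finally show ?thesis .
      qed
      also have "ennreal (1 + (\<Sum>j<?K. (1 + \<bar>X j \<omega>\<bar>) ^ n)) = 1 + SXe \<omega>"
        using nn by (simp add: S S2 ennreal_plus)
      finally show ?case by (simp add: algebra_simps)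
    qed
  qed
  also have "\<dots> = ennreal (2 ^ n) * ((\<integral>\<^sup>+\<omega>. (1 + cntT t \<omega>) ^ (n + 1) \<partial>M) +
                    (\<integral>\<^sup>+\<omega>. (1 + cntT t \<omega>) ^ (n + 1) * SXe \<omega> \<partial>M))"
    by (subst nn_integral_cmult) (auto simp: SXe_def simp del: power_Suc intro!: nn_integral_add arg_cong2[where f="(*)"])
  also have "\<dots> < \<infinity>"
    using moment_cnt[of t "n + 1"] moment_cntX[OF Xn, of t "n + 1"]
    by (simp add: SXe_def ennreal_mult_less_top)
  finally show "(\<integral>\<^sup>+\<omega>. ennreal (norm (Dmm n t (Vs \<omega>))) \<partial>M) < \<infinity>" .
qed

end

definition EE :: "idx set \<Rightarrow> (idx \<Rightarrow> real) \<Rightarrow> (idx \<Rightarrow> real)" where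
  "EE A y = ext A (restrict y A)"

lemma EE_apply: "EE A y i = (if i \<in> A then y i else 0)"
  by (simp add: EE_def ext_restrict)

lemma xx_EE: "xx (EE A y) k = (if Inr (Inl k) \<in> A then xx y k else 0)"
  and ll_EE: "ll (EE A y) k = (if Inr (Inr k) \<in> A then ll y k else 0)"
  and tt_EE: "tt (EE A y) k = (if Inl k \<in> A then tt y k else 0)"
  by (simp_all add: xx_def ll_def tt_def EE_apply)

lemma meas_EE[measurable]: "EE A \<in> measurable SS SS"
  unfolding EE_def by (rule measurable_compose[OF measurable_restrict meas_ext]) auto

lemma meas_trm1[measurable]: "(\<lambda>y. trm d s y j) \<in> borel_measurable SS"
  unfolding trm_def by measurable

lemma meas_Phi_comp[measurable]:
  assumes [measurable]: "a \<in> borel_measurable N" "b \<in> measurable N SS"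
  shows "(\<lambda>x. Phi d (a x) (b x)) \<in> borel_measurable N"
  using measurable_compose[OF measurable_Pair[OF assms] meas_Phi[of d]] by simp

definition Aset :: "nat \<Rightarrow> idx set" where
  "Aset j = Inl ` {..j} \<union> {Inr (Inl j), Inr (Inr j)}"
definition Bset :: "nat \<Rightarrow> idx set" where
  "Bset j = range (sh (Suc j))"

lemma Aset_Bset_disj: "Aset j \<inter> Bset j = {}"
  by (auto simp: Aset_def Bset_def sh_def split: sum.splits)

lemma Arr_EE: "(\<And>k. k < m \<Longrightarrow> Inl k \<in> A) \<Longrightarrow> Arr (EE A y) m = Arr y m"
  unfolding Arr_def tt_def EE_apply by (intro sum.cong) auto

lemma trm_EE_A: "trm d s (EE (Aset j) y) j = trm d s y j"
proof -
  have "Arr (EE (Aset j) y) (Suc j) = Arr y (Suc j)"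
    by (rule Arr_EE) (auto simp: Aset_def)
  moreover have "ll (EE (Aset j) y) j = ll y j" "xx (EE (Aset j) y) j = xx y j"
    by (auto simp: ll_def xx_def EE_apply Aset_def)
  ultimately show ?thesis by (simp add: trm_def)
qed

lemma Arr_EE_A: "Arr (EE (Aset j) y) (Suc j) = Arr y (Suc j)"
  by (rule Arr_EE) (auto simp: Aset_def)

lemma shift_EE_B: "shift (Suc j) (EE (Bset j) y) = shift (Suc j) y"
  by (auto simp: shift_def EE_apply Bset_def)

context ibnr
begin

lemma indep_groups:
  assumes "A \<inter> B = {}"
  shows "indep_var SS (\<lambda>\<omega>. EE A (Vs \<omega>)) SS (\<lambda>\<omega>. EE B (Vs \<omega>))"
proof -
  have "indep_var (PiM A (\<lambda>_. borel)) (\<lambda>\<omega>. restrict (\<lambda>i. V i \<omega>) A)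
                  (PiM B (\<lambda>_. borel)) (\<lambda>\<omega>. restrict (\<lambda>i. V i \<omega>) B)"
    by (rule indep_var_restrict[OF indepV]) (use assms in auto)
  then have "indep_var SS (ext A \<circ> (\<lambda>\<omega>. restrict (\<lambda>i. V i \<omega>) A)) SS (ext B \<circ> (\<lambda>\<omega>. restrict (\<lambda>i. V i \<omega>) B))"
    by (rule indep_var_compose) measurable
  then show ?thesis by (simp add: comp_def EE_def Vs_def[abs_def])
qed

lemma indep_groups_real:
  fixes g1 g2 :: "(idx \<Rightarrow> real) \<Rightarrow> real"
  assumes "A \<inter> B = {}" and [measurable]: "g1 \<in> borel_measurable SS" "g2 \<in> borel_measurable SS"
  shows "indep_var borel (\<lambda>\<omega>. g1 (EE A (Vs \<omega>))) borel (\<lambda>\<omega>. g2 (EE B (Vs \<omega>)))"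
  using indep_var_compose[OF indep_groups[OF assms(1)] assms(2,3)] by (simp add: comp_def)

definition zeta :: "nat \<Rightarrow> real \<Rightarrow> real" where
  "zeta i s = (\<integral>\<omega>. Phi \<delta> s (Vs \<omega>) ^ i \<partial>M)"

lemma zeta_meas[measurable]: "zeta i \<in> borel_measurable borel"
proof -
  have "(\<lambda>(s, \<omega>). Phi \<delta> s (Vs \<omega>) ^ i) \<in> borel_measurable (borel \<Otimes>\<^sub>M M)"
    by (simp add: split_beta')
  then show ?thesis unfolding zeta_def
    by (rule sigma_finite_measure.borel_measurable_lebesgue_integral[OF prob_space_imp_sigma_finite[OF prob_space_axioms]])
qed


lemma integrable_Fterm:
  assumes Xn: "integrable M (\<lambda>\<omega>. \<bar>X 0 \<omega>\<bar> ^ n)" and i: "i < n"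
  shows "integrable M (\<lambda>\<omega>. Fterm \<delta> n i t (Vs \<omega>) j)"
proof (rule Bochner_Integration.integrable_bound[OF integrable_Dmm[OF Xn, of t]])
  show "(\<lambda>\<omega>. Fterm \<delta> n i t (Vs \<omega>) j) \<in> borel_measurable M" by measurable
  show "AE \<omega> in M. norm (Fterm \<delta> n i t (Vs \<omega>) j) \<le> norm (Dmm n t (Vs \<omega>))"
    using AE_good[of t] by eventually_elim (use Fterm_le_Dm[OF _ delta i] Dmm_good abs_of_nonneg[OF Dm_nonneg] in auto)
qed

lemma integrable_Phi_pow:
  assumes Xn: "integrable M (\<lambda>\<omega>. \<bar>X 0 \<omega>\<bar> ^ n)" and st: "s \<le> t" and i: "i \<le> n"
  shows "integrable M (\<lambda>\<omega>. Phi \<delta> s (Vs \<omega>) ^ i)"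
proof (rule Bochner_Integration.integrable_bound[OF integrable_Dmm[OF Xn, of t]])
  show "(\<lambda>\<omega>. Phi \<delta> s (Vs \<omega>) ^ i) \<in> borel_measurable M" by measurable
  show "AE \<omega> in M. norm (Phi \<delta> s (Vs \<omega>) ^ i) \<le> norm (Dmm n t (Vs \<omega>))"
    using AE_good[of t] by eventually_elim (use Phi_pow_bound[OF _ delta st i] Dmm_good abs_of_nonneg[OF Dm_nonneg] in auto)
qed

definition Dint :: "nat \<Rightarrow> real \<Rightarrow> real" where "Dint n t = (\<integral>\<omega>. Dmm n t (Vs \<omega>) \<partial>M)"

lemma zeta_bound:
  assumes Xn: "integrable M (\<lambda>\<omega>. \<bar>X 0 \<omega>\<bar> ^ n)" and st: "s \<le> t" and i: "i \<le> n"
  shows "\<bar>zeta i s\<bar> \<le> Dint n t"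
proof -
  have "\<bar>zeta i s\<bar> \<le> (\<integral>\<omega>. \<bar>Phi \<delta> s (Vs \<omega>) ^ i\<bar> \<partial>M)"
    unfolding zeta_def by (rule integral_abs_bound)
  also have "\<dots> \<le> Dint n t"
    unfolding Dint_def
  proof (rule integral_mono_AE)
    show "integrable M (\<lambda>\<omega>. \<bar>Phi \<delta> s (Vs \<omega>) ^ i\<bar>)"
      using integrable_Phi_pow[OF Xn st i] by auto
    show "integrable M (\<lambda>\<omega>. Dmm n t (Vs \<omega>))" by (rule integrable_Dmm[OF Xn])
    show "AE \<omega> in M. \<bar>Phi \<delta> s (Vs \<omega>) ^ i\<bar> \<le> Dmm n t (Vs \<omega>)"
      using AE_good[of t] by eventually_elim (use Phi_pow_bound[OF _ delta st i] Dmm_good in auto)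
  qed
  finally show ?thesis .
qed

lemma w_prob: "(\<integral>\<^sup>+x. ennreal (w x) \<partial>lborel) = 1"
proof -
  have "distr M lborel (L 0) = density lborel (\<lambda>x. ennreal (w x))"
    using L_dens[of 0] by (simp add: distributed_def)
  moreover have "emeasure (distr M lborel (L 0)) UNIV = 1"
    by (subst emeasure_distr) (auto simp: emeasure_space_1[simplified])
  moreover have "emeasure (density lborel (\<lambda>x. ennreal (w x))) UNIV = (\<integral>\<^sup>+x. ennreal (w x) * indicator UNIV x \<partial>lborel)"
    using w_meas by (intro emeasure_density) (auto simp: measurable_lborel1)
  ultimately show ?thesis by simp
qed

lemma w_integrable: "integrable lborel w"
  using w_prob w_nonneg w_meas
  by (intro integrableI_bounded) (auto simp: measurable_lborel1)

lemma w_integral: "(\<integral>x. w x \<partial>lborel) = 1"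
  using w_prob w_nonneg w_meas
  by (subst integral_eq_nn_integral) (auto simp: measurable_lborel1)

lemma DH_meas[measurable]: "(\<lambda>v. DH u w v) \<in> borel_measurable borel"
proof -
  have [measurable]: "w \<in> borel_measurable borel" by (rule w_meas)
  have "(\<lambda>(v, y). indicator {v..} y *\<^sub>R (exp (- u * (y - v)) * w y)) \<in> borel_measurable (borel \<Otimes>\<^sub>M lborel)"
  proof -
    have "(\<lambda>(v, y). indicator {v..} y *\<^sub>R (exp (- u * (y - v)) * w y)) =
          (\<lambda>(v::real, y::real). (if v \<le> y then 1 else 0) * (exp (- u * (y - v)) * w y))"
      by (auto simp: indicator_def fun_eq_iff)
    also have "\<dots> \<in> borel_measurable (borel \<Otimes>\<^sub>M lborel)" by measurable
    finally show ?thesis .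
  qed
  from lborel.borel_measurable_lebesgue_integral[OF this]
  show ?thesis by (simp add: DH_def set_lebesgue_integral_def)
qed

lemma DH_bound: assumes "0 \<le> u" shows "\<bar>DH u w v\<bar> \<le> 1"
proof -
  have "\<bar>DH u w v\<bar> \<le> (\<integral>y. \<bar>indicator {v..} y *\<^sub>R (exp (- u * (y - v)) * w y)\<bar> \<partial>lborel)"
    unfolding DH_def set_lebesgue_integral_def by (rule integral_abs_bound)
  also have "\<dots> \<le> (\<integral>y. w y \<partial>lborel)"
  proof (rule integral_mono)
    show "integrable lborel w" by (rule w_integrable)
    show "integrable lborel (\<lambda>y. \<bar>indicator {v..} y *\<^sub>R (exp (- u * (y - v)) * w y)\<bar>)"
    proof (rule Bochner_Integration.integrable_bound[OF w_integrable])
      show "(\<lambda>y. \<bar>indicator {v..} y *\<^sub>R (exp (- u * (y - v)) * w y)\<bar>) \<in> borel_measurable lborel"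
        using w_meas by (simp add: measurable_lborel1)
      show "AE y in lborel. norm \<bar>indicator {v..} y *\<^sub>R (exp (- u * (y - v)) * w y)\<bar> \<le> norm (w y)"
      proof (rule AE_I2)
        fix y
        have "exp (- u * (y - v)) \<le> 1" if "v \<le> y" using that assms by (simp add: mult_nonneg_nonneg)
        then show "norm \<bar>indicator {v..} y *\<^sub>R (exp (- u * (y - v)) * w y)\<bar> \<le> norm (w y)"
          using w_nonneg[of y] by (auto simp: indicator_def abs_mult intro: mult_left_le_one_le)
      qed
    qed
    fix y
    have "exp (- u * (y - v)) \<le> 1" if "v \<le> y" using that assms by (simp add: mult_nonneg_nonneg)
    then show "\<bar>indicator {v..} y *\<^sub>R (exp (- u * (y - v)) * w y)\<bar> \<le> w y"
      using w_nonneg[of y] by (auto simp: indicator_def abs_mult intro: mult_left_le_one_le)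
  qed
  finally show ?thesis by (simp add: w_integral)
qed


lemma Fterm_step1:
  assumes Xn: "integrable M (\<lambda>\<omega>. \<bar>X 0 \<omega>\<bar> ^ n)" and i: "i < n"
  shows "(\<integral>\<omega>. Fterm \<delta> n i t (Vs \<omega>) j \<partial>M) =
    (\<integral>\<omega>. real (n choose i) * trm \<delta> t (Vs \<omega>) j ^ (n - i) * (exp (- \<delta> * T j \<omega>) ^ i * zeta i (t - T j \<omega>)) \<partial>M)"
proof -
  define h where "h = (\<lambda>(u, v). real (n choose i) * trm \<delta> t u j ^ (n - i) *
      (exp (- \<delta> * Arr u (Suc j)) * Phi \<delta> (t - Arr u (Suc j)) (shift (Suc j) v)) ^ i)"
  have hm[measurable]: "h \<in> borel_measurable (SS \<Otimes>\<^sub>M SS)"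
    unfolding h_def by measurable
  have eqAE: "AE \<omega> in M. Fterm \<delta> n i t (Vs \<omega>) j = h (EE (Aset j) (Vs \<omega>), EE (Bset j) (Vs \<omega>))"
    using AE_good[of t] by eventually_elim
      (simp add: h_def Fterm_shift trm_EE_A Arr_EE_A shift_EE_B)
  have int: "integrable M (\<lambda>\<omega>. h (EE (Aset j) (Vs \<omega>), EE (Bset j) (Vs \<omega>)))"
    by (rule integrable_cong_AE_imp[OF integrable_Fterm[OF Xn i, of t j] _ eqAE]) measurable
  have "(\<integral>\<omega>. Fterm \<delta> n i t (Vs \<omega>) j \<partial>M) = (\<integral>\<omega>. h (EE (Aset j) (Vs \<omega>), EE (Bset j) (Vs \<omega>)) \<partial>M)"
    using eqAE by (intro integral_cong_AE) auto
  also have "\<dots> = (\<integral>\<omega>. (\<integral>\<omega>'. h (EE (Aset j) (Vs \<omega>), EE (Bset j) (Vs \<omega>')) \<partial>M) \<partial>M)"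
    by (rule indep_var_integral_split[OF indep_groups[OF Aset_Bset_disj] hm int])
  also have "\<dots> = (\<integral>\<omega>. real (n choose i) * trm \<delta> t (Vs \<omega>) j ^ (n - i) * (exp (- \<delta> * T j \<omega>) ^ i * zeta i (t - T j \<omega>)) \<partial>M)"
  proof (rule Bochner_Integration.integral_cong[OF refl])
    fix \<omega>
    let ?c = "real (n choose i) * trm \<delta> t (Vs \<omega>) j ^ (n - i) * exp (- \<delta> * T j \<omega>) ^ i"
    have "(\<integral>\<omega>'. h (EE (Aset j) (Vs \<omega>), EE (Bset j) (Vs \<omega>')) \<partial>M) =
          (\<integral>\<omega>'. ?c * Phi \<delta> (t - T j \<omega>) (shift (Suc j) (Vs \<omega>')) ^ i \<partial>M)"
      by (simp add: h_def trm_EE_A Arr_EE_A shift_EE_B Arr_Vs_T power_mult_distrib mult_ac)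
    also have "\<dots> = ?c * (\<integral>\<omega>'. Phi \<delta> (t - T j \<omega>) (shift (Suc j) (Vs \<omega>')) ^ i \<partial>M)"
      by (rule integral_mult_right_zero)
    also have "(\<integral>\<omega>'. Phi \<delta> (t - T j \<omega>) (shift (Suc j) (Vs \<omega>')) ^ i \<partial>M) = zeta i (t - T j \<omega>)"
      unfolding zeta_def by (rule integral_shift[where g="\<lambda>y. Phi \<delta> (t - T j \<omega>) y ^ i"]) measurable
    finally show "(\<integral>\<omega>'. h (EE (Aset j) (Vs \<omega>), EE (Bset j) (Vs \<omega>')) \<partial>M) =
        real (n choose i) * trm \<delta> t (Vs \<omega>) j ^ (n - i) * (exp (- \<delta> * T j \<omega>) ^ i * zeta i (t - T j \<omega>))"
      by (simp add: mult_ac)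
  qed
  finally show ?thesis .
qed


definition Kf :: "nat \<Rightarrow> nat \<Rightarrow> real \<Rightarrow> real \<Rightarrow> real \<Rightarrow> real" where
  "Kf n i t x l = indicator {0..t} x * (exp (- \<delta> * (x + l)) ^ (n - i) * (if t < x + l then 1 else 0) *
      (exp (- \<delta> * x) ^ i * zeta i (t - x)))"

definition Gf :: "nat \<Rightarrow> nat \<Rightarrow> real \<Rightarrow> real \<Rightarrow> real" where
  "Gf n i t x = indicator {0..t} x * (exp (- real (n - i) * \<delta> * t) *
      (exp (- real i * \<delta> * x) * DH (real (n - i) * \<delta>) w (t - x) * zeta i (t - x)))"

lemma Kf_meas[measurable]: "(\<lambda>(x, l). Kf n i t x l) \<in> borel_measurable (borel \<Otimes>\<^sub>M borel)"
  unfolding Kf_def by measurable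

lemma Gf_meas[measurable]: "Gf n i t \<in> borel_measurable borel"
  unfolding Gf_def by measurable

lemma integral_L:
  fixes g :: "real \<Rightarrow> real" assumes [measurable]: "g \<in> borel_measurable borel"
  shows "(\<integral>\<omega>. g (L j \<omega>) \<partial>M) = (\<integral>l. w l * g l \<partial>lborel)"
proof -
  have "(\<integral>\<omega>. g (L j \<omega>) \<partial>M) = integral\<^sup>L (distr M lborel (L j)) g"
    by (rule integral_distr[symmetric]) (auto simp: measurable_lborel1)
  also have "\<dots> = integral\<^sup>L (density lborel (\<lambda>x. ennreal (w x))) g"
    using L_dens[of j] by (simp add: distributed_def)
  also have "\<dots> = (\<integral>l. w l * g l \<partial>lborel)"
    using w_meas w_nonneg by (intro integral_real_density) (auto simp: measurable_lborel1)
  finally show ?thesis .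
qed

lemma Kf_L: "(\<integral>\<omega>. Kf n i t x (L j \<omega>) \<partial>M) = Gf n i t x"
proof -
  let ?p = "n - i"
  let ?c = "indicator {0..t} x * (exp (- \<delta> * x) ^ i * zeta i (t - x))"
  have "(\<integral>\<omega>. Kf n i t x (L j \<omega>) \<partial>M) = (\<integral>l. w l * Kf n i t x l \<partial>lborel)"
    by (rule integral_L) (simp add: Kf_def)
  also have "\<dots> = (\<integral>l. ?c * (w l * exp (- \<delta> * (x + l)) ^ ?p * (if t < x + l then 1 else 0)) \<partial>lborel)"
    by (intro Bochner_Integration.integral_cong) (auto simp: Kf_def mult_ac)
  also have "\<dots> = ?c * (\<integral>l. w l * exp (- \<delta> * (x + l)) ^ ?p * (if t < x + l then 1 else 0) \<partial>lborel)"
    by (rule integral_mult_right_zero)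
  also have "(\<integral>l. w l * exp (- \<delta> * (x + l)) ^ ?p * (if t < x + l then 1 else 0) \<partial>lborel) =
             exp (- real ?p * \<delta> * t) * DH (real ?p * \<delta>) w (t - x)"
  proof -
    have "exp (- real ?p * \<delta> * t) * DH (real ?p * \<delta>) w (t - x) =
          (\<integral>l. exp (- real ?p * \<delta> * t) * (indicator {t - x..} l * (exp (- (real ?p * \<delta>) * (l - (t - x))) * w l)) \<partial>lborel)"
      unfolding DH_def set_lebesgue_integral_def by (simp add: integral_mult_right_zero)
    also have "\<dots> = (\<integral>l. w l * exp (- \<delta> * (x + l)) ^ ?p * (if t < x + l then 1 else 0) \<partial>lborel)"
    proof (rule integral_cong_AE)
      show "AE l in lborel. exp (- real ?p * \<delta> * t) * (indicator {t - x..} l * (exp (- (real ?p * \<delta>) * (l - (t - x))) * w l)) =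
              w l * exp (- \<delta> * (x + l)) ^ ?p * (if t < x + l then 1 else 0)"
        using AE_lborel_singleton[of "t - x"]
      proof eventually_elim
        case (elim l)
        have e: "exp (- real ?p * \<delta> * t) * exp (- (real ?p * \<delta>) * (l - (t - x))) = exp (- \<delta> * (x + l)) ^ ?p"
          by (simp add: exp_add[symmetric] exp_of_nat_mult[symmetric] algebra_simps)
        show ?case using elim e by (auto simp: indicator_def mult_ac)
      qed
    qed (use w_meas in \<open>auto simp: measurable_lborel1\<close>)
    finally show ?thesis by simp
  qed
  finally show ?thesis
    by (simp add: Gf_def exp_of_nat_mult[symmetric] mult_ac)
qed


lemma Kf_comp[measurable]:
  assumes [measurable]: "a \<in> borel_measurable N" "b \<in> borel_measurable N"
  shows "(\<lambda>x. Kf n i t (a x) (b x)) \<in> borel_measurable N"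
  using measurable_compose[OF measurable_Pair[OF assms] Kf_meas[of n i t]] by simp

lemma Dint_nonneg: "0 \<le> Dint n t"
  unfolding Dint_def using AE_good[of t]
  by (intro integral_nonneg_AE) (auto elim!: eventually_mono simp: Dmm_good Dm_nonneg)

lemma Kf_bound:
  assumes Xn: "integrable M (\<lambda>\<omega>. \<bar>X 0 \<omega>\<bar> ^ n)" and i: "i \<le> n"
  shows "\<bar>Kf n i t x l\<bar> \<le> Dint n t"
proof (cases "x \<in> {0..t}")
  case False then show ?thesis using Dint_nonneg by (simp add: Kf_def)
next
  case True
  have a: "\<bar>exp (- \<delta> * (x + l)) ^ (n - i) * (if t < x + l then 1 else 0)\<bar> \<le> 1"
  proof (cases "t < x + l")
    case True
    then have "0 \<le> \<delta> * (x + l)" using \<open>x \<in> {0..t}\<close> delta by (intro mult_nonneg_nonneg) auto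
    then have "exp (- \<delta> * (x + l)) \<le> 1" by simp
    then show ?thesis using True by (simp add: power_le_one)
  qed simp
  have b: "\<bar>exp (- \<delta> * x) ^ i\<bar> \<le> 1"
  proof -
    have "0 \<le> \<delta> * x" using True delta by (intro mult_nonneg_nonneg) auto
    then have "exp (- \<delta> * x) \<le> 1" by simp
    then show ?thesis by (simp add: power_le_one)
  qed
  have c: "\<bar>zeta i (t - x)\<bar> \<le> Dint n t" using True by (intro zeta_bound[OF Xn _ i]) auto
  have "\<bar>Kf n i t x l\<bar> = \<bar>exp (- \<delta> * (x + l)) ^ (n - i) * (if t < x + l then 1 else 0)\<bar> *
      (\<bar>exp (- \<delta> * x) ^ i\<bar> * \<bar>zeta i (t - x)\<bar>)"
    using True by (simp add: Kf_def abs_mult)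
  also have "\<dots> \<le> 1 * (1 * Dint n t)"
    using a b c by (intro mult_mono) auto
  finally show ?thesis by simp
qed

lemma pow_le_1_plus:
  fixes x :: real assumes "p \<le> n" shows "\<bar>x\<bar> ^ p \<le> 1 + \<bar>x\<bar> ^ n"
proof (cases "\<bar>x\<bar> \<le> 1")
  case True then have "\<bar>x\<bar> ^ p \<le> 1" by (simp add: power_le_one)
  then show ?thesis by (smt (verit) zero_le_power abs_ge_zero)
next
  case False then have "\<bar>x\<bar> ^ p \<le> \<bar>x\<bar> ^ n" using assms by (intro power_increasing) auto
  then show ?thesis by simp
qed

lemma integrable_Xpow:
  assumes Xn: "integrable M (\<lambda>\<omega>. \<bar>X 0 \<omega>\<bar> ^ n)" and p: "p \<le> n"
  shows "integrable M (\<lambda>\<omega>. X k \<omega> ^ p)"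
proof (rule integrable_X)
  show "integrable M (\<lambda>\<omega>. X 0 \<omega> ^ p)"
  proof (rule Bochner_Integration.integrable_bound)
    show "integrable M (\<lambda>\<omega>. 1 + \<bar>X 0 \<omega>\<bar> ^ n)" using Xn by auto
    show "AE \<omega> in M. norm (X 0 \<omega> ^ p) \<le> norm (1 + \<bar>X 0 \<omega>\<bar> ^ n)"
      using pow_le_1_plus[OF p] by (auto simp: power_abs)
  qed measurable
qed measurable

lemma Fterm_step2:
  assumes Xn: "integrable M (\<lambda>\<omega>. \<bar>X 0 \<omega>\<bar> ^ n)" and i: "i < n"
  shows "(\<integral>\<omega>. real (n choose i) * trm \<delta> t (Vs \<omega>) j ^ (n - i) * (exp (- \<delta> * T j \<omega>) ^ i * zeta i (t - T j \<omega>)) \<partial>M)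
    = real (n choose i) * (\<integral>\<omega>. X 0 \<omega> ^ (n - i) \<partial>M) * (\<integral>\<omega>. Gf n i t (T j \<omega>) \<partial>M)"
proof -
  let ?p = "n - i"
  have p1: "1 \<le> ?p" using i by simp
  have pw: "trm \<delta> t (Vs \<omega>) j ^ ?p * (exp (- \<delta> * T j \<omega>) ^ i * zeta i (t - T j \<omega>)) =
        X j \<omega> ^ ?p * Kf n i t (T j \<omega>) (L j \<omega>)" if \<omega>: "\<omega> \<in> space M" for \<omega>
  proof -
    have Tp: "0 < T j \<omega>" using T_pos[OF \<omega>] .
    have p0: "?p \<noteq> 0" using i by simp
    show ?thesis
    proof (cases "T j \<omega> \<le> t \<and> t < T j \<omega> + L j \<omega>")
      case True
      then show ?thesis using Tp
        by (simp add: trm_def Kf_def Arr_Vs_T power_mult_distrib mult_ac)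
    next
      case False
      have "trm \<delta> t (Vs \<omega>) j = 0" unfolding trm_def Arr_Vs_T ll_Vs if_not_P[OF False] by simp
      moreover have "Kf n i t (T j \<omega>) (L j \<omega>) = 0" using False by (auto simp: Kf_def)
      ultimately show ?thesis using p0 by simp
    qed
  qed
  have "(\<integral>\<omega>. real (n choose i) * trm \<delta> t (Vs \<omega>) j ^ ?p * (exp (- \<delta> * T j \<omega>) ^ i * zeta i (t - T j \<omega>)) \<partial>M)
      = (\<integral>\<omega>. real (n choose i) * (X j \<omega> ^ ?p * Kf n i t (T j \<omega>) (L j \<omega>)) \<partial>M)"
    by (intro Bochner_Integration.integral_cong) (auto simp: pw[symmetric] mult_ac)
  also have "\<dots> = real (n choose i) * (\<integral>\<omega>. X j \<omega> ^ ?p * Kf n i t (T j \<omega>) (L j \<omega>) \<partial>M)"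
    by (rule integral_mult_right_zero)
  also have "(\<integral>\<omega>. X j \<omega> ^ ?p * Kf n i t (T j \<omega>) (L j \<omega>) \<partial>M) =
      (\<integral>\<omega>. X j \<omega> ^ ?p \<partial>M) * (\<integral>\<omega>. Kf n i t (T j \<omega>) (L j \<omega>) \<partial>M)"
  proof (rule indep_var_lebesgue_integral)
    have "indep_var borel (\<lambda>\<omega>. (\<lambda>y. xx y j ^ ?p) (EE {Inr (Inl j)} (Vs \<omega>)))
                    borel (\<lambda>\<omega>. (\<lambda>y. Kf n i t (Arr y (Suc j)) (ll y j)) (EE (Inl ` {..j} \<union> {Inr (Inr j)}) (Vs \<omega>)))"
      by (rule indep_groups_real) auto
    moreover have "Arr (EE (Inl ` {..j} \<union> {Inr (Inr j)}) y) (Suc j) = Arr y (Suc j)" for y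
      by (rule Arr_EE) auto
    ultimately show "indep_var borel (\<lambda>\<omega>. X j \<omega> ^ ?p) borel (\<lambda>\<omega>. Kf n i t (T j \<omega>) (L j \<omega>))"
      by (simp add: xx_EE ll_EE Arr_Vs_T)
    show "integrable M (\<lambda>\<omega>. X j \<omega> ^ ?p)" by (rule integrable_Xpow[OF Xn]) simp
    show "integrable M (\<lambda>\<omega>. Kf n i t (T j \<omega>) (L j \<omega>))"
      by (rule integrable_bounded[where B="Dint n t"]) (use Kf_bound[OF Xn] i in auto)
  qed
  also have "(\<integral>\<omega>. X j \<omega> ^ ?p \<partial>M) = (\<integral>\<omega>. X 0 \<omega> ^ ?p \<partial>M)"
    by (rule integral_X) simp
  also have "(\<integral>\<omega>. Kf n i t (T j \<omega>) (L j \<omega>) \<partial>M) = (\<integral>\<omega>. Gf n i t (T j \<omega>) \<partial>M)"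
  proof -
    have ind: "indep_var borel (\<lambda>\<omega>. (\<lambda>y. Arr y (Suc j)) (EE (Inl ` {..j}) (Vs \<omega>)))
                    borel (\<lambda>\<omega>. (\<lambda>y. ll y j) (EE {Inr (Inr j)} (Vs \<omega>)))"
      by (rule indep_groups_real) auto
    have "Arr (EE (Inl ` {..j}) y) (Suc j) = Arr y (Suc j)" for y by (rule Arr_EE) auto
    with ind have "indep_var borel (\<lambda>\<omega>. T j \<omega>) borel (\<lambda>\<omega>. L j \<omega>)"
      by (simp add: ll_EE Arr_Vs_T)
    then have ind': "indep_var borel (T j) borel (L j)" by (simp add: eta_contract_eq)
    have "(\<integral>\<omega>. Kf n i t (T j \<omega>) (L j \<omega>) \<partial>M) = (\<integral>\<omega>. (\<lambda>(x, l). Kf n i t x l) (T j \<omega>, L j \<omega>) \<partial>M)" by simp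
    also have "\<dots> = (\<integral>\<omega>. (\<integral>\<omega>'. (\<lambda>(x, l). Kf n i t x l) (T j \<omega>, L j \<omega>') \<partial>M) \<partial>M)"
    proof (rule indep_var_integral_split[OF ind'])
      show "(\<lambda>(x, l). Kf n i t x l) \<in> borel_measurable (borel \<Otimes>\<^sub>M borel)" by simp
      show "integrable M (\<lambda>\<omega>. (\<lambda>(x, l). Kf n i t x l) (T j \<omega>, L j \<omega>))"
        by (rule integrable_bounded[where B="Dint n t"]) (use Kf_bound[OF Xn] i in auto)
    qed
    also have "\<dots> = (\<integral>\<omega>. Gf n i t (T j \<omega>) \<partial>M)" by (simp add: Kf_L)
    finally show ?thesis .
  qed
  finally show ?thesis by (simp add: mult_ac)
qed


lemma Gf_bound:
  assumes Xn: "integrable M (\<lambda>\<omega>. \<bar>X 0 \<omega>\<bar> ^ n)" and i: "i \<le> n"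
  shows "\<bar>Gf n i t x\<bar> \<le> Dint n t"
proof (cases "x \<in> {0..t}")
  case False then show ?thesis using Dint_nonneg by (simp add: Gf_def)
next
  case True
  have e1: "\<bar>exp (- real (n - i) * \<delta> * t)\<bar> \<le> 1"
    using True delta by (simp add: mult_nonneg_nonneg)
  have e2: "\<bar>exp (- real i * \<delta> * x)\<bar> \<le> 1"
    using True delta by (simp add: mult_nonneg_nonneg)
  have d: "\<bar>DH (real (n - i) * \<delta>) w (t - x)\<bar> \<le> 1"
    using delta by (intro DH_bound) simp
  have c: "\<bar>zeta i (t - x)\<bar> \<le> Dint n t" using True by (intro zeta_bound[OF Xn _ i]) auto
  have "\<bar>Gf n i t x\<bar> = \<bar>exp (- real (n - i) * \<delta> * t)\<bar> * (\<bar>exp (- real i * \<delta> * x)\<bar> *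
           \<bar>DH (real (n - i) * \<delta>) w (t - x)\<bar> * \<bar>zeta i (t - x)\<bar>)"
    using True by (simp add: Gf_def abs_mult)
  also have "\<dots> \<le> 1 * (1 * 1 * Dint n t)"
    using e1 e2 d c by (intro mult_mono) auto
  finally show ?thesis by simp
qed

lemma main_locale:
  assumes Xn: "integrable M (\<lambda>\<omega>. \<bar>X 0 \<omega>\<bar> ^ n)" and n: "1 \<le> n"
  shows "(\<integral>\<omega>. Phi \<delta> t (Vs \<omega>) ^ n \<partial>M) =
    (\<Sum>i<n. real (n choose i) * (\<integral>\<omega>. X 0 \<omega> ^ (n - i) \<partial>M) * (\<integral>x. Gf n i t x \<partial>interval_measure mfun))"
proof -
  let ?F = "\<lambda>i j \<omega>. Fterm \<delta> n i t (Vs \<omega>) j"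
  have s1: "(\<lambda>j. \<integral>\<omega>. ?F i j \<omega> \<partial>M) sums
      (real (n choose i) * (\<integral>\<omega>. X 0 \<omega> ^ (n - i) \<partial>M) * (\<integral>x. Gf n i t x \<partial>interval_measure mfun))"
    if i: "i < n" for i
  proof -
    have "(\<lambda>j. \<integral>\<omega>. Gf n i t (T j \<omega>) \<partial>M) sums (\<integral>x. Gf n i t x \<partial>interval_measure mfun)"
    proof (rule sums_T_IM[where c="Dint n t" and t=t])
      show "\<bar>Gf n i t x\<bar> \<le> Dint n t" for x using Gf_bound[OF Xn] i by auto
      show "Gf n i t x = 0" if "t < x" for x using that by (simp add: Gf_def)
    qed simp
    then have "(\<lambda>j. real (n choose i) * (\<integral>\<omega>. X 0 \<omega> ^ (n - i) \<partial>M) * (\<integral>\<omega>. Gf n i t (T j \<omega>) \<partial>M)) sums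
      (real (n choose i) * (\<integral>\<omega>. X 0 \<omega> ^ (n - i) \<partial>M) * (\<integral>x. Gf n i t x \<partial>interval_measure mfun))"
      by (rule sums_mult)
    moreover have "(\<integral>\<omega>. ?F i j \<omega> \<partial>M) = real (n choose i) * (\<integral>\<omega>. X 0 \<omega> ^ (n - i) \<partial>M) * (\<integral>\<omega>. Gf n i t (T j \<omega>) \<partial>M)" for j
      by (simp only: Fterm_step1[OF Xn i] Fterm_step2[OF Xn i])
    ultimately show ?thesis by (simp only:)
  qed
  have s2: "(\<lambda>j. \<integral>\<omega>. (\<Sum>i<n. ?F i j \<omega>) \<partial>M) sums
      (\<Sum>i<n. real (n choose i) * (\<integral>\<omega>. X 0 \<omega> ^ (n - i) \<partial>M) * (\<integral>x. Gf n i t x \<partial>interval_measure mfun))"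
  proof -
    have "(\<lambda>j. \<Sum>i<n. \<integral>\<omega>. ?F i j \<omega> \<partial>M) sums
      (\<Sum>i<n. real (n choose i) * (\<integral>\<omega>. X 0 \<omega> ^ (n - i) \<partial>M) * (\<integral>x. Gf n i t x \<partial>interval_measure mfun))"
      by (rule sums_sum) (use s1 in auto)
    moreover have "(\<integral>\<omega>. (\<Sum>i<n. ?F i j \<omega>) \<partial>M) = (\<Sum>i<n. \<integral>\<omega>. ?F i j \<omega> \<partial>M)" for j
      by (rule Bochner_Integration.integral_sum) (auto intro: integrable_Fterm[OF Xn])
    ultimately show ?thesis by simp
  qed
  have s3: "(\<lambda>j. \<integral>\<omega>. (\<Sum>i<n. ?F i j \<omega>) \<partial>M) sums (\<integral>\<omega>. Phi \<delta> t (Vs \<omega>) ^ n \<partial>M)"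
    unfolding sums_def
  proof -
    have "(\<lambda>N. \<integral>\<omega>. (\<Sum>j<N. \<Sum>i<n. ?F i j \<omega>) \<partial>M) \<longlonglongrightarrow> (\<integral>\<omega>. Phi \<delta> t (Vs \<omega>) ^ n \<partial>M)"
    proof (rule integral_dominated_convergence[where w="\<lambda>\<omega>. Dmm n t (Vs \<omega>)"])
      show "(\<lambda>\<omega>. Phi \<delta> t (Vs \<omega>) ^ n) \<in> borel_measurable M" by measurable
      show "(\<lambda>\<omega>. \<Sum>j<N. \<Sum>i<n. ?F i j \<omega>) \<in> borel_measurable M" for N by measurable
      show "integrable M (\<lambda>\<omega>. Dmm n t (Vs \<omega>))" by (rule integrable_Dmm[OF Xn])
      show "AE \<omega> in M. (\<lambda>N. \<Sum>j<N. \<Sum>i<n. ?F i j \<omega>) \<longlonglongrightarrow> Phi \<delta> t (Vs \<omega>) ^ n"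
        using AE_good[of t] by eventually_elim (use Fterm_sums[OF _ n] in \<open>auto simp: sums_def\<close>)
      show "AE \<omega> in M. norm (\<Sum>j<N. \<Sum>i<n. ?F i j \<omega>) \<le> Dmm n t (Vs \<omega>)" for N
        using AE_good[of t] by eventually_elim (use Fpartial_bound[OF _ delta] Dmm_good in auto)
    qed
    moreover have "(\<integral>\<omega>. (\<Sum>j<N. \<Sum>i<n. ?F i j \<omega>) \<partial>M) = (\<Sum>j<N. \<integral>\<omega>. (\<Sum>i<n. ?F i j \<omega>) \<partial>M)" for N
      by (rule Bochner_Integration.integral_sum) (auto intro: integrable_Fterm[OF Xn])
    ultimately show "(\<lambda>N. \<Sum>j<N. \<integral>\<omega>. (\<Sum>i<n. ?F i j \<omega>) \<partial>M) \<longlonglongrightarrow> (\<integral>\<omega>. Phi \<delta> t (Vs \<omega>) ^ n \<partial>M)"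
      by simp
  qed
  from sums_unique2[OF s3 s2] show ?thesis .
qed

end

theorem theorem1:
  fixes M :: "'a measure"
    and \<tau> X L :: "nat \<Rightarrow> 'a \<Rightarrow> real"
    and f w :: "real \<Rightarrow> real"
    and \<delta> t :: real and n :: nat
  assumes "prob_space M"
    and indep: "prob_space.indep_vars M (\<lambda>_. borel) (case_sum \<tau> (case_sum X L)) UNIV"
    and tau_pos: "\<And>i \<omega>. \<omega> \<in> space M \<Longrightarrow> \<tau> i \<omega> > 0"
    and f_nonneg: "\<And>x. f x \<ge> 0" and f_meas: "f \<in> borel_measurable borel"
    and tau_dens: "\<And>i. distributed M lborel (\<tau> i) (\<lambda>x. ennreal (f x))"
    and X_ident: "\<And>i. distr M borel (X i) = distr M borel (X 0)"
    and X_mom: "integrable M (\<lambda>\<omega>. \<bar>X 0 \<omega>\<bar> ^ n)"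
    and w_nonneg: "\<And>x. w x \<ge> 0" and w_meas: "w \<in> borel_measurable borel"
    and L_dens: "\<And>i. distributed M lborel (L i) (\<lambda>x. ennreal (w x))"
    and delta: "\<delta> \<ge> 0"
    and t_pos: "t > 0"
    and n_pos: "n \<ge> 1"
  shows "(\<integral>\<omega>. (Zdisc \<delta> \<tau> X L t \<omega>) ^ n \<partial>M) =
    (\<Sum>i<n. (\<integral>\<omega>. (X 0 \<omega>) ^ (n - i) \<partial>M) * real (n choose i)
        * exp (- real (n - i) * \<delta> * t)
        * (\<integral>x\<in>{0..t}. exp (- real i * \<delta> * x) * DH (real (n - i) * \<delta>) w (t - x)
              * (\<integral>\<omega>. (Zdisc \<delta> \<tau> X L (t - x) \<omega>) ^ i \<partial>M)
           \<partial>(interval_measure (renewal_fun M \<tau>))))"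
proof -
  interpret ibnr M \<tau> X L f w \<delta>
    using assms by (simp add: ibnr_def ibnr_axioms_def)
  have rf: "renewal_fun M \<tau> = mfun" by (rule ext) (simp add: renewal_fun_eq mfun_def)
  have z: "(\<integral>\<omega>. (Zdisc \<delta> \<tau> X L s \<omega>) ^ i \<partial>M) = zeta i s" for i s
    by (simp add: zeta_def Zdisc_Phi)
  have g: "(\<integral>x. Gf n i t x \<partial>interval_measure mfun) = exp (- real (n - i) * \<delta> * t) *
      (\<integral>x\<in>{0..t}. exp (- real i * \<delta> * x) * DH (real (n - i) * \<delta>) w (t - x) * zeta i (t - x) \<partial>interval_measure mfun)" for i
    unfolding Gf_def set_lebesgue_integral_def
    by (simp add: integral_mult_right_zero[symmetric] mult_ac del: integral_mult_right_zero)
  show ?thesis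
    unfolding rf Zdisc_Phi main_locale[OF X_mom n_pos] g
    by (intro sum.cong refl) (simp add: mult_ac zeta_def)
qed


end
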